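(* Let $\mathsf{PA}^-$ be the theory of the non-negative parts of discretely ordered commutative rings, and let $T$ be $\mathsf{PA}^-$ together with all universal sentences (in the language $0,1,+,\cdot,\leq$) that are true in $\mathbb N$. Using the Markov coding of sequences (ur-strings) described in the context, and coding Hilbert-style proofs of the theory $\mathsf{BeSh}$ by such ur-strings, $T$ does not prove the sentence $\mathsf{con}(\mathsf{BeSh})$.
   Context: The theory $\mathsf{BeSh}$: its language consists of exactly two sentences, $\bot$ and $(\bot\to\bot)$; its only axiom is $(\bot\to\bot)$; its only rule is Modus Ponens (from $\bot$ and $(\bot\to\bot)$ infer $\bot$). A Hilbert-style proof is a finite sequence of sentences in which each occurrence is either an axiom or follows by Modus Ponens from two strictly earlier occurrences. Fix Gödel numbers $\ulcorner\bot\urcorner$ and $\ulcorner\bot\to\bot\urcorner$, which are distinct positive natural numbers. Markov coding. For a discretely ordered commutative ring $\mathcal R$ with non-negative part $\mathcal R^+$, let $\mathsf{SL}_2(\mathcal R^+)$ be the monoid (under matrix multiplication) of $2\times 2$ matrices with entries in $\mathcal R^+$ and determinant $1$; in a model of $\mathsf{PA}^-$ such matrices are represented by quadruples of elements, and quantifiers over matrices range over such quadruples. Write $\alpha_{ij}$ ($i,j\in\{0,1\}$) for the entries. Let $\mathtt A=\begin{pmatrix}1&1\\0&1\end{pmatrix}$, $\mathtt B=\begin{pmatrix}1&0\\1&1\end{pmatrix}$, and for a number $n$ let $[n]:=\mathtt B\mathtt A^n=\begin{pmatrix}1&n\\1&n+1\end{pmatrix}$. Define: $\alpha\le\beta$ iff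 $\alpha_{ij}\le\beta_{ij}$ for all $i,j$, and $\alpha<\beta$ iff $\alpha\le\beta$ and $\alpha\ne\beta$; $\alpha\preceq_{\mathsf i}\beta$ iff $\alpha^{-1}\beta$ has non-negative entries (i.e. $\alpha_{11}\beta_{00}\ge\alpha_{01}\beta_{10}$, $\alpha_{11}\beta_{01}\ge\alpha_{01}\beta_{11}$, $\alpha_{00}\beta_{10}\ge\alpha_{10}\beta_{00}$, $\alpha_{00}\beta_{11}\ge\alpha_{10}\beta_{01}$), and $\alpha\preceq_{\mathsf e}\beta$ iff $\beta\alpha^{-1}$ has non-negative entries; $\mathsf{ur}(\alpha)$ iff $\alpha$ is the identity matrix or $\mathtt B\preceq_{\mathsf i}\alpha$; $\alpha\preceq^{\mathsf u}_{\mathsf i}\beta$ iff $\alpha\preceq_{\mathsf i}\beta\wedge\mathsf{ur}(\alpha)\wedge\mathsf{ur}(\alpha^{-1}\beta)$, and $\alpha\preceq^{\mathsf u}_{\mathsf e}\beta$ iff $\alpha\preceq_{\mathsf e}\beta\wedge\mathsf{ur}(\alpha)\wedge\mathsf{ur}(\beta\alpha^{-1})$; $\mathsf{occ}(\alpha,n,\beta)$ iff $\alpha\preceq^{\mathsf u}_{\mathsf i}\beta\wedge[n]\preceq^{\mathsf u}_{\mathsf e}\alpha$. $\mathsf{proof}_0(\pi)$ is the formula: $\mathsf{ur}(\pi)\wedge\forall\alpha\le\pi\,\forall n\le\alpha_{01}\,(\mathsf{occ}(\alpha,n,\pi)\to(n=\ulcorner\bot\to\bot\urcorner\vee n=\ulcorner\bot\urcorner))\wedge\forall\alpha\le\pi\,(\mathsf{occ}(\alpha,\ulcorner\bot\urcorner,\pi)\to\exists\beta<\alpha\,\exists\gamma<\alpha\,(\mathsf{occ}(\beta,\ulcorner\bot\urcorner,\alpha)\wedge\mathsf{occ}(\gamma,\ulcorner\bot\to\bot\urcorner,\alpha)))$.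 $\mathsf{proof}(\pi,n)$ iff $\mathsf{proof}_0(\pi)\wedge[n]\preceq_{\mathsf e}\pi$. Finally $\mathsf{con}(\mathsf{BeSh})$ is $\forall\pi\,\neg\mathsf{proof}(\pi,\ulcorner\bot\urcorner)$. *)

theory Defs
  imports Main
begin

datatype trm = Var nat | Zero | One | Plus trm trm | Times trm trm

datatype fm = Eq trm trm | Leq trm trm | Neg fm | Conj fm fm | Disj fm fm
  | Imp fm fm | All nat fm | Ex nat fm

record 'a struc =
  zr :: 'a
  on :: 'a
  ad :: "'a \<Rightarrow> 'a \<Rightarrow> 'a"
  mu :: "'a \<Rightarrow> 'a \<Rightarrow> 'a"
  lq :: "'a \<Rightarrow> 'a \<Rightarrow> bool"

fun evt :: "'a struc \<Rightarrow> (nat \<Rightarrow> 'a) \<Rightarrow> trm \<Rightarrow> 'a" where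
  "evt M e (Var i) = e i"
| "evt M e Zero = zr M"
| "evt M e One = on M"
| "evt M e (Plus s t) = ad M (evt M e s) (evt M e t)"
| "evt M e (Times s t) = mu M (evt M e s) (evt M e t)"

fun sat :: "'a struc \<Rightarrow> (nat \<Rightarrow> 'a) \<Rightarrow> fm \<Rightarrow> bool" where
  "sat M e (Eq s t) = (evt M e s = evt M e t)"
| "sat M e (Leq s t) = lq M (evt M e s) (evt M e t)"
| "sat M e (Neg p) = (\<not> sat M e p)"
| "sat M e (Conj p q) = (sat M e p \<and> sat M e q)"
| "sat M e (Disj p q) = (sat M e p \<or> sat M e q)"
| "sat M e (Imp p q) = (sat M e p \<longrightarrow> sat M e q)"
| "sat M e (All x p) = (\<forall>a. sat M (e(x := a)) p)"
| "sat M e (Ex x p) = (\<exists>a. sat M (e(x := a)) p)"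

fun fvt :: "trm \<Rightarrow> nat set" where
  "fvt (Var i) = {i}"
| "fvt Zero = {}"
| "fvt One = {}"
| "fvt (Plus s t) = fvt s \<union> fvt t"
| "fvt (Times s t) = fvt s \<union> fvt t"

fun fv :: "fm \<Rightarrow> nat set" where
  "fv (Eq s t) = fvt s \<union> fvt t"
| "fv (Leq s t) = fvt s \<union> fvt t"
| "fv (Neg p) = fv p"
| "fv (Conj p q) = fv p \<union> fv q"
| "fv (Disj p q) = fv p \<union> fv q"
| "fv (Imp p q) = fv p \<union> fv q"
| "fv (All x p) = fv p - {x}"
| "fv (Ex x p) = fv p - {x}"

fun qfree :: "fm \<Rightarrow> bool" where
  "qfree (Eq s t) = True"
| "qfree (Leq s t) = True"
| "qfree (Neg p) = qfree p"
| "qfree (Conj p q) = (qfree p \<and> qfree q)"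
| "qfree (Disj p q) = (qfree p \<and> qfree q)"
| "qfree (Imp p q) = (qfree p \<and> qfree q)"
| "qfree (All x p) = False"
| "qfree (Ex x p) = False"

inductive universal :: "fm \<Rightarrow> bool" where
  "qfree p \<Longrightarrow> universal p"
| "universal p \<Longrightarrow> universal (All x p)"

definition sentence :: "fm \<Rightarrow> bool" where
  "sentence p \<longleftrightarrow> fv p = {}"

definition holds :: "'a struc \<Rightarrow> fm \<Rightarrow> bool" where
  "holds M p \<longleftrightarrow> (\<forall>e. sat M e p)"

definition Nstd :: "nat struc" where
  "Nstd = \<lparr>zr = 0, on = 1, ad = (+), mu = (*), lq = (\<le>)\<rparr>"

definition lt :: "'a struc \<Rightarrow> 'a \<Rightarrow> 'a \<Rightarrow> bool" where
  "lt M x y \<longleftrightarrow> lq M x y \<and> x \<noteq> y"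

definition PAminus :: "'a struc \<Rightarrow> bool" where
  "PAminus M \<longleftrightarrow>
    (\<forall>x y z. ad M (ad M x y) z = ad M x (ad M y z)) \<and>
    (\<forall>x y. ad M x y = ad M y x) \<and>
    (\<forall>x y z. mu M (mu M x y) z = mu M x (mu M y z)) \<and>
    (\<forall>x y. mu M x y = mu M y x) \<and>
    (\<forall>x y z. mu M x (ad M y z) = ad M (mu M x y) (mu M x z)) \<and>
    (\<forall>x. ad M x (zr M) = x) \<and>
    (\<forall>x. mu M x (zr M) = zr M) \<and>
    (\<forall>x. mu M x (on M) = x) \<and>
    (\<forall>x. lq M x x) \<and>
    (\<forall>x y. lq M x y \<and> lq M y x \<longrightarrow> x = y) \<and>
    (\<forall>x y z. lq M x y \<and> lq M y z \<longrightarrow> lq M x z) \<and>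
    (\<forall>x y. lq M x y \<or> lq M y x) \<and>
    (\<forall>x y z. lt M x y \<longrightarrow> lt M (ad M x z) (ad M y z)) \<and>
    (\<forall>x y z. lt M (zr M) z \<and> lt M x y \<longrightarrow> lt M (mu M x z) (mu M y z)) \<and>
    (\<forall>x y. lq M x y \<longrightarrow> (\<exists>z. ad M x z = y)) \<and>
    lt M (zr M) (on M) \<and>
    (\<forall>x. lq M (zr M) x) \<and>
    (\<forall>x. lt M (zr M) x \<longrightarrow> lq M (on M) x)"

definition model_T :: "'a struc \<Rightarrow> bool" where
  "model_T M \<longleftrightarrow> PAminus M \<and>
     (\<forall>p. universal p \<and> sentence p \<and> holds Nstd p \<longrightarrow> holds M p)"

fun numM :: "'a struc \<Rightarrow> nat \<Rightarrow> 'a" where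
  "numM M 0 = zr M"
| "numM M (Suc k) = ad M (numM M k) (on M)"

datatype 'a m2 = M2 (e00: 'a) (e01: 'a) (e10: 'a) (e11: 'a)

definition sl2 :: "'a struc \<Rightarrow> 'a m2 \<Rightarrow> bool" where
  "sl2 M a \<longleftrightarrow> mu M (e00 a) (e11 a) = ad M (mu M (e01 a) (e10 a)) (on M)"

definition mmul :: "'a struc \<Rightarrow> 'a m2 \<Rightarrow> 'a m2 \<Rightarrow> 'a m2" where
  "mmul M a b = M2
     (ad M (mu M (e00 a) (e00 b)) (mu M (e01 a) (e10 b)))
     (ad M (mu M (e00 a) (e01 b)) (mu M (e01 a) (e11 b)))
     (ad M (mu M (e10 a) (e00 b)) (mu M (e11 a) (e10 b)))
     (ad M (mu M (e10 a) (e01 b)) (mu M (e11 a) (e11 b)))"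

definition mle :: "'a struc \<Rightarrow> 'a m2 \<Rightarrow> 'a m2 \<Rightarrow> bool" where
  "mle M a b \<longleftrightarrow> lq M (e00 a) (e00 b) \<and> lq M (e01 a) (e01 b) \<and>
                  lq M (e10 a) (e10 b) \<and> lq M (e11 a) (e11 b)"

definition mlt :: "'a struc \<Rightarrow> 'a m2 \<Rightarrow> 'a m2 \<Rightarrow> bool" where
  "mlt M a b \<longleftrightarrow> mle M a b \<and> a \<noteq> b"

text \<open>alpha^{-1} beta has non-negative entries.\<close>
definition prec_i :: "'a struc \<Rightarrow> 'a m2 \<Rightarrow> 'a m2 \<Rightarrow> bool" where
  "prec_i M a b \<longleftrightarrow>
     lq M (mu M (e01 a) (e10 b)) (mu M (e11 a) (e00 b)) \<and>
     lq M (mu M (e01 a) (e11 b)) (mu M (e11 a) (e01 b)) \<and>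
     lq M (mu M (e10 a) (e00 b)) (mu M (e00 a) (e10 b)) \<and>
     lq M (mu M (e10 a) (e01 b)) (mu M (e00 a) (e11 b))"

text \<open>beta alpha^{-1} has non-negative entries.\<close>
definition prec_e :: "'a struc \<Rightarrow> 'a m2 \<Rightarrow> 'a m2 \<Rightarrow> bool" where
  "prec_e M a b \<longleftrightarrow>
     lq M (mu M (e01 b) (e10 a)) (mu M (e00 b) (e11 a)) \<and>
     lq M (mu M (e00 b) (e01 a)) (mu M (e01 b) (e00 a)) \<and>
     lq M (mu M (e11 b) (e10 a)) (mu M (e10 b) (e11 a)) \<and>
     lq M (mu M (e10 b) (e01 a)) (mu M (e11 b) (e00 a))"

definition idM :: "'a struc \<Rightarrow> 'a m2" where
  "idM M = M2 (on M) (zr M) (zr M) (on M)"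

definition matB :: "'a struc \<Rightarrow> 'a m2" where
  "matB M = M2 (on M) (zr M) (on M) (on M)"

definition ur :: "'a struc \<Rightarrow> 'a m2 \<Rightarrow> bool" where
  "ur M a \<longleftrightarrow> a = idM M \<or> prec_i M (matB M) a"

text \<open>The matrix alpha^{-1} beta (resp. beta alpha^{-1}) is the unique gamma in SL_2(M)
  with alpha gamma = beta (resp. gamma alpha = beta).\<close>
definition prec_iu :: "'a struc \<Rightarrow> 'a m2 \<Rightarrow> 'a m2 \<Rightarrow> bool" where
  "prec_iu M a b \<longleftrightarrow> prec_i M a b \<and> ur M a \<and>
     (\<exists>g. sl2 M g \<and> mmul M a g = b \<and> ur M g)"

definition prec_eu :: "'a struc \<Rightarrow> 'a m2 \<Rightarrow> 'a m2 \<Rightarrow> bool" where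
  "prec_eu M a b \<longleftrightarrow> prec_e M a b \<and> ur M a \<and>
     (\<exists>g. sl2 M g \<and> mmul M g a = b \<and> ur M g)"

definition brk :: "'a struc \<Rightarrow> 'a \<Rightarrow> 'a m2" where
  "brk M n = M2 (on M) n (on M) (ad M n (on M))"

definition occ :: "'a struc \<Rightarrow> 'a m2 \<Rightarrow> 'a \<Rightarrow> 'a m2 \<Rightarrow> bool" where
  "occ M a n b \<longleftrightarrow> prec_iu M a b \<and> prec_eu M (brk M n) a"

definition proof0 :: "'a struc \<Rightarrow> nat \<Rightarrow> nat \<Rightarrow> 'a m2 \<Rightarrow> bool" where
  "proof0 M gbot gimp p \<longleftrightarrow> ur M p \<and>
     (\<forall>a. sl2 M a \<and> mle M a p \<longrightarrow>
        (\<forall>n. lq M n (e01 a) \<longrightarrow> occ M a n p \<longrightarrow> n = numM M gimp \<or> n = numM M gbot)) \<and>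
     (\<forall>a. sl2 M a \<and> mle M a p \<longrightarrow> occ M a (numM M gbot) p \<longrightarrow>
        (\<exists>b. sl2 M b \<and> mlt M b a \<and> (\<exists>c. sl2 M c \<and> mlt M c a \<and>
            occ M b (numM M gbot) a \<and> occ M c (numM M gimp) a)))"

definition isproof :: "'a struc \<Rightarrow> nat \<Rightarrow> nat \<Rightarrow> 'a m2 \<Rightarrow> 'a \<Rightarrow> bool" where
  "isproof M gbot gimp p n \<longleftrightarrow> proof0 M gbot gimp p \<and> prec_e M (brk M n) p"

definition con_BeSh :: "'a struc \<Rightarrow> nat \<Rightarrow> nat \<Rightarrow> bool" where
  "con_BeSh M gbot gimp \<longleftrightarrow> (\<forall>p. sl2 M p \<longrightarrow> \<not> isproof M gbot gimp p (numM M gbot))"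

end

theory Submission
  imports Defs "HOL-Library.Countable" "HOL-Library.Countable_Set" Complex_Main
begin


definition mm :: "nat m2 \<Rightarrow> nat m2 \<Rightarrow> nat m2" where
  "mm a b = M2 (e00 a * e00 b + e01 a * e10 b) (e00 a * e01 b + e01 a * e11 b)
               (e10 a * e00 b + e11 a * e10 b) (e10 a * e01 b + e11 a * e11 b)"

definition det1 :: "nat m2 \<Rightarrow> bool" where
  "det1 a \<longleftrightarrow> e00 a * e11 a = e01 a * e10 a + 1"

definition I2 :: "nat m2" where "I2 = M2 1 0 0 1"
definition Am :: "nat m2" where "Am = M2 1 1 0 1"
definition Bm :: "nat m2" where "Bm = M2 1 0 1 1"

lemma mmul_Nstd: "mmul Nstd a b = mm a b"
  by (simp add: mmul_def mm_def Nstd_def)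
lemma sl2_Nstd: "sl2 Nstd a = det1 a"
  by (simp add: sl2_def det1_def Nstd_def)

lemma mm_assoc: "mm (mm a b) c = mm a (mm b c)"
  by (cases a; cases b; cases c) (simp add: mm_def algebra_simps)

lemma mm_I2 [simp]: "mm I2 a = a" "mm a I2 = a"
  by (cases a; simp add: mm_def I2_def)+

lemma det1_mm: "det1 a \<Longrightarrow> det1 b \<Longrightarrow> det1 (mm a b)"
proof -
  assume a: "det1 a" and b: "det1 b"
  obtain a0 a1 a2 a3 where A: "a = M2 a0 a1 a2 a3" by (cases a)
  obtain b0 b1 b2 b3 where B: "b = M2 b0 b1 b2 b3" by (cases b)
  have ha: "int a0 * int a3 = int a1 * int a2 + 1" using a A unfolding det1_def
    by (metis m2.sel of_nat_1 of_nat_add of_nat_mult)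
  have hb: "int b0 * int b3 = int b1 * int b2 + 1" using b B unfolding det1_def
    by (metis m2.sel of_nat_1 of_nat_add of_nat_mult)
  have "(int a0 * int b0 + int a1 * int b2) * (int a2 * int b1 + int a3 * int b3)
       = (int a0 * int b1 + int a1 * int b3) * (int a2 * int b0 + int a3 * int b2) + 1"
  proof -
    have "(int a0 * int b0 + int a1 * int b2) * (int a2 * int b1 + int a3 * int b3)
       - (int a0 * int b1 + int a1 * int b3) * (int a2 * int b0 + int a3 * int b2)
       = (int a0 * int a3 - int a1 * int a2) * (int b0 * int b3 - int b1 * int b2)"
      by (simp add: algebra_simps)
    also have "\<dots> = 1" using ha hb by simp
    finally show ?thesis by simp
  qed
  hence "int ((a0 * b0 + a1 * b2) * (a2 * b1 + a3 * b3)) = int ((a0 * b1 + a1 * b3) * (a2 * b0 + a3 * b2) + 1)"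
    by simp
  hence "(a0 * b0 + a1 * b2) * (a2 * b1 + a3 * b3) = (a0 * b1 + a1 * b3) * (a2 * b0 + a3 * b2) + 1"
    using of_nat_eq_iff by blast
  thus ?thesis by (simp add: A B mm_def det1_def)
qed

fun ev :: "bool list \<Rightarrow> nat m2" where
  "ev [] = I2"
| "ev (True # w) = mm Bm (ev w)"
| "ev (False # w) = mm Am (ev w)"

lemma ev_append: "ev (u @ v) = mm (ev u) (ev v)"
proof (induction u)
  case Nil then show ?case by simp
next
  case (Cons x u) then show ?case by (cases x) (simp_all add: mm_assoc)
qed

lemma det1_I2: "det1 I2" by (simp add: det1_def I2_def)
lemma det1_Am: "det1 Am" by (simp add: det1_def Am_def)
lemma det1_Bm: "det1 Bm" by (simp add: det1_def Bm_def)

lemma det1_ev: "det1 (ev w)"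
proof (induction w)
  case Nil then show ?case by (simp add: det1_I2)
next
  case (Cons x w) then show ?case by (cases x) (simp_all add: det1_mm det1_Am det1_Bm)
qed

lemma det1_pos00: assumes "det1 a" shows "e00 a \<ge> 1"
proof (rule ccontr)
  assume "\<not> ?thesis" hence "e00 a = 0" by simp
  thus False using assms by (simp add: det1_def)
qed
lemma det1_pos11: assumes "det1 a" shows "e11 a \<ge> 1"
proof (rule ccontr)
  assume "\<not> ?thesis" hence "e11 a = 0" by simp
  thus False using assms by (simp add: det1_def)
qed

lemma sl2_rows:
  fixes x0 x1 x2 x3 :: nat
  assumes d: "x0 * x3 = x1 * x2 + 1" and ni: "M2 x0 x1 x2 x3 \<noteq> I2"
  shows "(x2 \<le> x0 \<and> x3 \<le> x1) \<or> (x0 \<le> x2 \<and> x1 \<le> x3)"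
proof (rule ccontr)
  assume "\<not> ?thesis"
  hence c: "(x0 < x2 \<and> x3 < x1) \<or> (x2 < x0 \<and> x1 < x3)"
    by auto
  show False
  proof -
    { assume h: "x0 < x2" "x3 < x1"
      have "x0 * x3 \<le> x2 * x3" using h by simp
      also have "\<dots> \<le> x2 * x1" using h by simp
      finally have "x0 * x3 \<le> x1 * x2" by (simp add: mult.commute)
      hence False using d by simp }
    moreover
    { assume h: "x2 < x0" "x1 < x3"
      have "(x2 + 1) * (x1 + 1) \<le> x0 * x3" using h by (intro mult_mono) auto
      hence "x1 * x2 + x1 + x2 + 1 \<le> x1 * x2 + 1" using d by (simp add: algebra_simps)
      hence "x1 = 0" "x2 = 0" by auto
      hence "x0 * x3 = 1" using d by simp
      hence "x0 = 1" "x3 = 1" by auto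
      hence False using ni \<open>x1 = 0\<close> \<open>x2 = 0\<close> by (simp add: I2_def) }
    ultimately show False using c by blast
  qed
qed

lemma word_exists: "det1 X \<Longrightarrow> \<exists>w. ev w = X"
proof (induction "e00 X + e01 X + e10 X + e11 X" arbitrary: X rule: less_induct)
  case less
  obtain x0 x1 x2 x3 where X: "X = M2 x0 x1 x2 x3" by (cases X)
  have d: "x0 * x3 = x1 * x2 + 1" using less.prems X by (simp add: det1_def)
  show ?case
  proof (cases "X = I2")
    case True then show ?thesis by (intro exI[of _ "[]"]) simp
  next
    case False
    have x0: "x0 \<ge> 1" and x3: "x3 \<ge> 1" using det1_pos00[OF less.prems] det1_pos11[OF less.prems] X by auto
    from sl2_rows[OF d] False X
    have "(x2 \<le> x0 \<and> x3 \<le> x1) \<or> (x0 \<le> x2 \<and> x1 \<le> x3)" by simp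
    then show ?thesis
    proof
      assume h: "x2 \<le> x0 \<and> x3 \<le> x1"
      define Y where "Y = M2 (x0 - x2) (x1 - x3) x2 x3"
      have XY: "X = mm Am Y" using h by (simp add: X Y_def mm_def Am_def)
      have dY: "det1 Y"
      proof -
        have le: "x2 * x3 \<le> x1 * x2" using h by simp
        have "(x0 - x2) * x3 = x0 * x3 - x2 * x3" by (simp add: diff_mult_distrib)
        also have "\<dots> = (x1 * x2 - x2 * x3) + 1" by (simp only: d Nat.add_diff_assoc2[OF le])
        also have "x1 * x2 - x2 * x3 = (x1 - x3) * x2" by (simp add: diff_mult_distrib mult.commute[of x3 x2])
        finally have "(x0 - x2) * x3 = (x1 - x3) * x2 + 1" .
        thus ?thesis by (simp add: Y_def det1_def)
      qed
      have "e00 Y + e01 Y + e10 Y + e11 Y < e00 X + e01 X + e10 X + e11 X"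
        using h x3 by (simp add: X Y_def)
      then obtain w where "ev w = Y" using less.hyps dY by blast
      hence "ev (False # w) = X" using XY by simp
      thus ?thesis by blast
    next
      assume h: "x0 \<le> x2 \<and> x1 \<le> x3"
      define Y where "Y = M2 x0 x1 (x2 - x0) (x3 - x1)"
      have XY: "X = mm Bm Y" using h by (simp add: X Y_def mm_def Bm_def)
      have dY: "det1 Y"
      proof -
        have le: "x1 * x0 \<le> x1 * x2" using h by simp
        have "x0 * (x3 - x1) = x0 * x3 - x0 * x1" by (simp add: diff_mult_distrib2)
        also have "\<dots> = (x1 * x2 - x1 * x0) + 1" by (simp only: d mult.commute[of x0 x1] Nat.add_diff_assoc2[OF le])
        also have "x1 * x2 - x1 * x0 = x1 * (x2 - x0)" by (simp add: diff_mult_distrib2)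
        finally have "x0 * (x3 - x1) = x1 * (x2 - x0) + 1" .
        thus ?thesis by (simp add: Y_def det1_def)
      qed
      have "e00 Y + e01 Y + e10 Y + e11 Y < e00 X + e01 X + e10 X + e11 X"
        using h x0 by (simp add: X Y_def)
      then obtain w where "ev w = Y" using less.hyps dY by blast
      hence "ev (True # w) = X" using XY by simp
      thus ?thesis by blast
    qed
  qed
qed

lemma Bm_ne_Am: "det1 y \<Longrightarrow> det1 z \<Longrightarrow> mm Bm y \<noteq> mm Am z"
  by (cases y; cases z) (auto simp: mm_def Am_def Bm_def det1_def)
lemma Bm_ne_I2: "mm Bm y \<noteq> I2"
  by (cases y) (auto simp: mm_def Bm_def I2_def)
lemma Am_ne_I2: "mm Am y \<noteq> I2"
  by (cases y) (auto simp: mm_def Am_def I2_def)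
lemma Bm_cancel: "mm Bm y = mm Bm z \<Longrightarrow> y = z"
  by (cases y; cases z) (auto simp: mm_def Bm_def)
lemma Am_cancel: "mm Am y = mm Am z \<Longrightarrow> y = z"
  by (cases y; cases z) (auto simp: mm_def Am_def)

lemma ev_inj: "ev u = ev v \<Longrightarrow> u = v"
proof (induction u arbitrary: v)
  case Nil
  show ?case
  proof (cases v)
    case (Cons y v')
    then show ?thesis using Nil Bm_ne_I2 Am_ne_I2 by (cases y) (simp_all, metis, metis)
  qed simp
next
  case (Cons x u)
  show ?case
  proof (cases v)
    case Nil
    then show ?thesis using Cons.prems by (cases x) (simp_all add: Bm_ne_I2 Am_ne_I2)
  next
    case (Cons y v')
    have ne1: "mm Bm (ev u) \<noteq> mm Am (ev v')" by (rule Bm_ne_Am[OF det1_ev det1_ev])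
    have ne2: "mm Bm (ev v') \<noteq> mm Am (ev u)" by (rule Bm_ne_Am[OF det1_ev det1_ev])
    show ?thesis
    proof (cases x; cases y)
      assume "x" "y"
      hence "mm Bm (ev u) = mm Bm (ev v')" using Cons Cons.prems by simp
      hence "u = v'" using Cons.IH Bm_cancel by blast
      thus ?thesis using Cons \<open>x\<close> \<open>y\<close> by simp
    next
      assume "x" "\<not> y"
      hence False using Cons Cons.prems ne1 by simp
      thus ?thesis ..
    next
      assume "\<not> x" "y"
      hence False using Cons Cons.prems ne2 by simp
      thus ?thesis ..
    next
      assume "\<not> x" "\<not> y"
      hence "mm Am (ev u) = mm Am (ev v')" using Cons Cons.prems by simp
      hence "u = v'" using Cons.IH Am_cancel by blast
      thus ?thesis using Cons \<open>\<not> x\<close> \<open>\<not> y\<close> by simp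
    qed
  qed
qed

lemma ur_Nstd: "ur Nstd X \<longleftrightarrow> X = I2 \<or> (e00 X \<le> e10 X \<and> e01 X \<le> e11 X)"
  by (cases X) (simp add: ur_def idM_def matB_def prec_i_def Nstd_def I2_def)

lemma ur_ev: "ur Nstd (ev w) \<longleftrightarrow> (w = [] \<or> hd w)"
proof (cases w)
  case Nil then show ?thesis by (simp add: ur_Nstd)
next
  case (Cons x w')
  obtain y0 y1 y2 y3 where Y: "ev w' = M2 y0 y1 y2 y3" by (cases "ev w'")
  have d: "y0 * y3 = y1 * y2 + 1" using det1_ev[of w'] Y by (simp add: det1_def)
  show ?thesis
  proof (cases x)
    case True then show ?thesis using Cons Y by (simp add: ur_Nstd mm_def Bm_def)
  next
    case False
    have "ev w \<noteq> I2" using Cons False Am_ne_I2 by simp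
    moreover have "\<not> (y0 + y2 \<le> y2 \<and> y1 + y3 \<le> y3)" using d by auto
    ultimately show ?thesis using Cons Y False by (simp add: ur_Nstd mm_def Am_def)
  qed
qed

definition blk :: "nat \<Rightarrow> bool list" where "blk k = True # replicate k False"

lemma ev_repF: "ev (replicate k False) = M2 1 k 0 1"
  by (induction k) (simp_all add: I2_def mm_def Am_def)

lemma ev_blk: "ev (blk k) = M2 1 k 1 (k + 1)"
  by (simp add: blk_def ev_repF mm_def Bm_def)

lemma brk_Nstd: "brk Nstd k = ev (blk k)"
  by (simp add: brk_def Nstd_def ev_blk)

lemma suffix_false: "u \<noteq> [] \<Longrightarrow> u @ us = blk k \<Longrightarrow> us \<noteq> [] \<Longrightarrow> \<not> hd us"
proof -
  assume u: "u \<noteq> []" and e: "u @ us = blk k" and us: "us \<noteq> []"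
  obtain x u' where "u = x # u'" using u by (cases u) auto
  hence "u' @ us = replicate k False" using e by (simp add: blk_def)
  hence "set (u' @ us) \<subseteq> {False}" by auto
  hence "set us \<subseteq> {False}" by simp
  thus ?thesis using us by (cases us) auto
qed

lemma prefix_blocks:
  "u @ v = concat (map blk ws) \<Longrightarrow> (v = [] \<or> hd v) \<Longrightarrow> \<exists>i \<le> length ws. u = concat (map blk (take i ws))"
proof (induction ws arbitrary: u v)
  case Nil then show ?case by simp
next
  case (Cons k ws)
  show ?case
  proof (cases "u = []")
    case True then show ?thesis by (intro exI[of _ 0]) simp
  next
    case False
    have "u @ v = blk k @ concat (map blk ws)" using Cons.prems by simp
    then obtain us where
      "(u = blk k @ us \<and> us @ v = concat (map blk ws)) \<or> (u @ us = blk k \<and> v = us @ concat (map blk ws))"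
      by (auto simp: append_eq_append_conv2)
    then show ?thesis
    proof
      assume h: "u = blk k @ us \<and> us @ v = concat (map blk ws)"
      then obtain i where "i \<le> length ws" "us = concat (map blk (take i ws))"
        using Cons.IH Cons.prems(2) by blast
      thus ?thesis using h by (intro exI[of _ "Suc i"]) simp
    next
      assume h: "u @ us = blk k \<and> v = us @ concat (map blk ws)"
      show ?thesis
      proof (cases "us = []")
        case True then show ?thesis using h by (intro exI[of _ 1]) simp
      next
        case ne: False
        have "\<not> hd us" using suffix_false[OF False _ ne] h by blast
        moreover have "hd v = hd us" "v \<noteq> []" using h ne by auto
        ultimately show ?thesis using Cons.prems(2) by simp
      qed
    qed
  qed
qed

lemma takeWhile_rep: "takeWhile Not (replicate k False @ True # zs) = replicate k False"
  by (induction k) auto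

lemma last_block: "xs @ blk k = ys @ blk l \<Longrightarrow> k = l"
proof -
  assume "xs @ blk k = ys @ blk l"
  hence "rev (xs @ blk k) = rev (ys @ blk l)" by simp
  hence "replicate k False @ True # rev xs = replicate l False @ True # rev ys"
    by (simp add: blk_def)
  hence "takeWhile Not (replicate k False @ True # rev xs) = takeWhile Not (replicate l False @ True # rev ys)"
    by simp
  hence "replicate k False = (replicate l False :: bool list)" by (simp only: takeWhile_rep)
  thus "k = l" by (metis length_replicate)
qed

definition pw :: "nat \<Rightarrow> nat \<Rightarrow> nat \<Rightarrow> nat \<Rightarrow> nat m2" where
  "pw c b p q = ev (concat (map blk (replicate p c @ replicate q b)))"

lemma W:
  assumes "b \<noteq> c" "det1 g" "mm a g = pw c b p q" "ur Nstd g" "mm h (ev (blk l)) = a" "det1 h"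
  shows "(l = c \<or> l = b) \<and> (l = b \<longrightarrow> (\<exists>j. 1 \<le> j \<and> j \<le> q \<and> a = pw c b p j))"
proof -
  define ws where "ws = replicate p c @ replicate q b"
  obtain wg where wg: "ev wg = g" using word_exists assms(2) by blast
  obtain wh where wh: "ev wh = h" using word_exists assms(6) by blast
  define wa where "wa = wh @ blk l"
  have ea: "ev wa = a" using wh assms(5) by (simp add: wa_def ev_append)
  have "ev (wa @ wg) = ev (concat (map blk ws))" using ea wg assms(3) by (simp add: ev_append pw_def ws_def)
  hence eq: "wa @ wg = concat (map blk ws)" by (rule ev_inj)
  have "wg = [] \<or> hd wg" using assms(4) wg ur_ev by blast
  then obtain i where i: "i \<le> length ws" "wa = concat (map blk (take i ws))"
    using prefix_blocks[OF eq] by blast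
  have "i \<noteq> 0"
  proof
    assume "i = 0" hence "wa = []" using i by simp
    thus False by (simp add: wa_def blk_def)
  qed
  then obtain i' where i': "i = Suc i'" by (cases i) auto
  have lt: "i' < length ws" using i i' by simp
  have "wa = concat (map blk (take i' ws)) @ blk (ws ! i')"
    using i i' lt by (simp add: take_Suc_conv_app_nth)
  hence l: "l = ws ! i'" using last_block wa_def by metis
  have wsi: "ws ! i' = (if i' < p then c else b)" using lt by (simp add: ws_def nth_append)
  show ?thesis
  proof (intro conjI impI)
    show "l = c \<or> l = b" using l wsi by auto
  next
    assume "l = b"
    hence "\<not> i' < p" using l wsi assms(1) by auto
    define j where "j = i - p"
    have ipq: "i \<le> p + q" using i(1) by (simp add: ws_def)
    have j: "1 \<le> j" "j \<le> q" using ipq \<open>\<not> i' < p\<close> i' unfolding j_def by linarith+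
    have "take i ws = replicate p c @ replicate j b"
      using \<open>\<not> i' < p\<close> i' j(2) by (simp add: ws_def j_def take_append min_def)
    hence "wa = concat (map blk (replicate p c @ replicate j b))" using i(2) by (simp only:)
    hence "a = pw c b p j" using ea unfolding pw_def by (simp only:)
    thus "\<exists>j. 1 \<le> j \<and> j \<le> q \<and> a = pw c b p j" using j by blast
  qed
qed


lemma det1_int: "det1 a \<Longrightarrow> int (e00 a) * int (e11 a) = int (e01 a) * int (e10 a) + 1"
  unfolding det1_def by (metis of_nat_1 of_nat_add of_nat_mult)

lemma prec_e_Nstd: "prec_e Nstd a b \<longleftrightarrow>
     e01 b * e10 a \<le> e00 b * e11 a \<and> e00 b * e01 a \<le> e01 b * e00 a \<and>
     e11 b * e10 a \<le> e10 b * e11 a \<and> e10 b * e01 a \<le> e11 b * e00 a"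
  by (simp add: prec_e_def Nstd_def)

lemma prec_i_Nstd: "prec_i Nstd a b \<longleftrightarrow>
     e01 a * e10 b \<le> e11 a * e00 b \<and> e01 a * e11 b \<le> e11 a * e01 b \<and>
     e10 a * e00 b \<le> e00 a * e10 b \<and> e10 a * e01 b \<le> e00 a * e11 b"
  by (simp add: prec_i_def Nstd_def)

lemma nat_le_via_int: "int y = int x + int z \<Longrightarrow> x \<le> (y::nat)" by simp

lemma prec_e_mm: assumes "det1 a" shows "prec_e Nstd a (mm g a)"
proof -
  obtain a0 a1 a2 a3 where A: "a = M2 a0 a1 a2 a3" by (cases a)
  obtain g0 g1 g2 g3 where G: "g = M2 g0 g1 g2 g3" by (cases g)
  have d: "int a0 * int a3 = int a1 * int a2 + 1" using det1_int[OF assms] A by simp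
  have "int ((g0 * a0 + g1 * a2) * a3) = int ((g0 * a1 + g1 * a3) * a2) + int g0"
    using d by (simp add: algebra_simps) (metis (no_types, opaque_lifting) mult.assoc mult.commute distrib_left mult.right_neutral)
  moreover have "int ((g0 * a1 + g1 * a3) * a0) = int ((g0 * a0 + g1 * a2) * a1) + int g1"
    using d by (simp add: algebra_simps) (metis (no_types, opaque_lifting) mult.assoc mult.commute distrib_left mult.right_neutral)
  moreover have "int ((g2 * a0 + g3 * a2) * a3) = int ((g2 * a1 + g3 * a3) * a2) + int g2"
    using d by (simp add: algebra_simps) (metis (no_types, opaque_lifting) mult.assoc mult.commute distrib_left mult.right_neutral)
  moreover have "int ((g2 * a1 + g3 * a3) * a0) = int ((g2 * a0 + g3 * a2) * a1) + int g3"
    using d by (simp add: algebra_simps) (metis (no_types, opaque_lifting) mult.assoc mult.commute distrib_left mult.right_neutral)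
  ultimately show ?thesis
    by (simp add: prec_e_Nstd A G mm_def nat_le_via_int)
qed

lemma int_diff_le: "int A - int B = int (g::nat) \<Longrightarrow> B \<le> (A::nat)" by linarith

lemma prec_i_mm: assumes "det1 a" shows "prec_i Nstd a (mm a g)"
proof -
  obtain a0 a1 a2 a3 where A: "a = M2 a0 a1 a2 a3" by (cases a)
  obtain g0 g1 g2 g3 where G: "g = M2 g0 g1 g2 g3" by (cases g)
  have d: "int a0 * int a3 - int a1 * int a2 = 1" using det1_int[OF assms] A by simp
  have "int (a3 * (a0 * g0 + a1 * g2)) - int (a1 * (a2 * g0 + a3 * g2)) = int g0 * (int a0 * int a3 - int a1 * int a2)"
    by (simp add: algebra_simps)
  hence "int (a3 * (a0 * g0 + a1 * g2)) - int (a1 * (a2 * g0 + a3 * g2)) = int g0" using d by simp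
  hence 1: "a1 * (a2 * g0 + a3 * g2) \<le> a3 * (a0 * g0 + a1 * g2)" by (rule int_diff_le)
  have "int (a3 * (a0 * g1 + a1 * g3)) - int (a1 * (a2 * g1 + a3 * g3)) = int g1 * (int a0 * int a3 - int a1 * int a2)"
    by (simp add: algebra_simps)
  hence "int (a3 * (a0 * g1 + a1 * g3)) - int (a1 * (a2 * g1 + a3 * g3)) = int g1" using d by simp
  hence 2: "a1 * (a2 * g1 + a3 * g3) \<le> a3 * (a0 * g1 + a1 * g3)" by (rule int_diff_le)
  have "int (a0 * (a2 * g0 + a3 * g2)) - int (a2 * (a0 * g0 + a1 * g2)) = int g2 * (int a0 * int a3 - int a1 * int a2)"
    by (simp add: algebra_simps)
  hence "int (a0 * (a2 * g0 + a3 * g2)) - int (a2 * (a0 * g0 + a1 * g2)) = int g2" using d by simp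
  hence 3: "a2 * (a0 * g0 + a1 * g2) \<le> a0 * (a2 * g0 + a3 * g2)" by (rule int_diff_le)
  have "int (a0 * (a2 * g1 + a3 * g3)) - int (a2 * (a0 * g1 + a1 * g3)) = int g3 * (int a0 * int a3 - int a1 * int a2)"
    by (simp add: algebra_simps)
  hence "int (a0 * (a2 * g1 + a3 * g3)) - int (a2 * (a0 * g1 + a1 * g3)) = int g3" using d by simp
  hence 4: "a2 * (a0 * g1 + a1 * g3) \<le> a0 * (a2 * g1 + a3 * g3)" by (rule int_diff_le)
  show ?thesis using 1 2 3 4 by (simp add: prec_i_Nstd A G mm_def)
qed

lemma prec_e_inv:
  assumes a: "det1 a" and x: "det1 x" and p: "prec_e Nstd a x"
  shows "\<exists>g. det1 g \<and> mm g a = x"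
proof -
  obtain a0 a1 a2 a3 where A: "a = M2 a0 a1 a2 a3" by (cases a)
  obtain x0 x1 x2 x3 where X: "x = M2 x0 x1 x2 x3" by (cases x)
  have da: "int a0 * int a3 - int a1 * int a2 = 1" using det1_int[OF a] A by simp
  have dx: "int x0 * int x3 - int x1 * int x2 = 1" using det1_int[OF x] X by simp
  have p1: "x1 * a2 \<le> x0 * a3" and p2: "x0 * a1 \<le> x1 * a0" and p3: "x3 * a2 \<le> x2 * a3"
    and p4: "x2 * a1 \<le> x3 * a0" using p by (simp_all add: prec_e_Nstd A X)
  define g0 where "g0 = x0 * a3 - x1 * a2"
  define g1 where "g1 = x1 * a0 - x0 * a1"
  define g2 where "g2 = x2 * a3 - x3 * a2"
  define g3 where "g3 = x3 * a0 - x2 * a1"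
  have G0: "int g0 = int x0 * int a3 - int x1 * int a2" using p1 by (simp add: g0_def of_nat_diff)
  have G1: "int g1 = int x1 * int a0 - int x0 * int a1" using p2 by (simp add: g1_def of_nat_diff)
  have G2: "int g2 = int x2 * int a3 - int x3 * int a2" using p3 by (simp add: g2_def of_nat_diff)
  have G3: "int g3 = int x3 * int a0 - int x2 * int a1" using p4 by (simp add: g3_def of_nat_diff)
  have e0: "int g0 * int a0 + int g1 * int a2 = int x0 * (int a0 * int a3 - int a1 * int a2)"
    unfolding G0 G1 by (simp add: algebra_simps)
  have e1: "int g0 * int a1 + int g1 * int a3 = int x1 * (int a0 * int a3 - int a1 * int a2)"
    unfolding G0 G1 by (simp add: algebra_simps)
  have e2: "int g2 * int a0 + int g3 * int a2 = int x2 * (int a0 * int a3 - int a1 * int a2)"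
    unfolding G2 G3 by (simp add: algebra_simps)
  have e3: "int g2 * int a1 + int g3 * int a3 = int x3 * (int a0 * int a3 - int a1 * int a2)"
    unfolding G2 G3 by (simp add: algebra_simps)
  have e4: "int g0 * int g3 - int g1 * int g2 = (int x0 * int x3 - int x1 * int x2) * (int a0 * int a3 - int a1 * int a2)"
    unfolding G0 G1 G2 G3 by (simp add: algebra_simps)
  have "int (g0 * a0 + g1 * a2) = int x0" "int (g0 * a1 + g1 * a3) = int x1"
       "int (g2 * a0 + g3 * a2) = int x2" "int (g2 * a1 + g3 * a3) = int x3"
    using e0 e1 e2 e3 da by simp_all
  hence m: "mm (M2 g0 g1 g2 g3) a = x" by (simp add: mm_def A X del: of_nat_add of_nat_mult)
  have "int (g0 * g3) = int (g1 * g2 + 1)" using e4 da dx by simp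
  hence "det1 (M2 g0 g1 g2 g3)" unfolding det1_def by (simp only: m2.sel of_nat_eq_iff)
  thus ?thesis using m by blast
qed

lemma le_mm: assumes "det1 y"
  shows "e00 x \<le> e00 (mm x y) \<and> e01 x \<le> e01 (mm x y) \<and> e10 x \<le> e10 (mm x y) \<and> e11 x \<le> e11 (mm x y)"
proof -
  have y0: "e00 y \<ge> 1" and y3: "e11 y \<ge> 1" using det1_pos00[OF assms] det1_pos11[OF assms] by auto
  have a: "e00 x \<le> e00 x * e00 y" using y0 by simp
  have b: "e01 x \<le> e01 x * e11 y" using y3 by simp
  have c: "e10 x \<le> e10 x * e00 y" using y0 by simp
  have d: "e11 x \<le> e11 x * e11 y" using y3 by simp
  have "e00 (mm x y) = e00 x * e00 y + e01 x * e10 y" "e01 (mm x y) = e00 x * e01 y + e01 x * e11 y"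
       "e10 (mm x y) = e10 x * e00 y + e11 x * e10 y" "e11 (mm x y) = e10 x * e01 y + e11 x * e11 y"
    by (simp_all add: mm_def)
  thus ?thesis using a b c d by linarith
qed

definition rdiv :: "nat \<Rightarrow> nat m2 \<Rightarrow> nat m2" where
  "rdiv k x = M2 (e00 x * (k + 1) - e01 x) (e01 x - k * e00 x) (e10 x * (k + 1) - e11 x) (e11 x - k * e10 x)"
definition ldiv :: "nat \<Rightarrow> nat m2 \<Rightarrow> nat m2" where
  "ldiv k x = M2 ((k + 1) * e00 x - k * e10 x) ((k + 1) * e01 x - k * e11 x) (e10 x - e00 x) (e11 x - e01 x)"

lemma diff_eqI: "a = b + c \<Longrightarrow> a - b = (c::nat)" by simp

lemma rdiv_mm: "rdiv k (mm d (ev (blk k))) = d"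
proof (cases d)
  case (M2 d0 d1 d2 d3)
  have 1: "(d0 + d1) * (k + 1) - (d0 * k + d1 * (k + 1)) = d0"
    by (rule diff_eqI) (simp add: algebra_simps)
  have 2: "(d0 * k + d1 * (k + 1)) - k * (d0 + d1) = d1"
    by (rule diff_eqI) (simp add: algebra_simps)
  have 3: "(d2 + d3) * (k + 1) - (d2 * k + d3 * (k + 1)) = d2"
    by (rule diff_eqI) (simp add: algebra_simps)
  have 4: "(d2 * k + d3 * (k + 1)) - k * (d2 + d3) = d3"
    by (rule diff_eqI) (simp add: algebra_simps)
  have "mm d (ev (blk k)) = M2 (d0 + d1) (d0 * k + d1 * (k + 1)) (d2 + d3) (d2 * k + d3 * (k + 1))"
    by (simp add: M2 mm_def ev_blk)
  thus ?thesis using 1 2 3 4 M2 by (simp only: rdiv_def m2.sel)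
qed

lemma ldiv_mm: "ldiv k (mm (ev (blk k)) d) = d"
proof (cases d)
  case (M2 d0 d1 d2 d3)
  have 1: "(k + 1) * (d0 + k * d2) - k * (d0 + (k + 1) * d2) = d0"
    by (rule diff_eqI) (simp add: algebra_simps)
  have 2: "(k + 1) * (d1 + k * d3) - k * (d1 + (k + 1) * d3) = d1"
    by (rule diff_eqI) (simp add: algebra_simps)
  have 3: "(d0 + (k + 1) * d2) - (d0 + k * d2) = d2"
    by (rule diff_eqI) (simp add: algebra_simps)
  have 4: "(d1 + (k + 1) * d3) - (d1 + k * d3) = d3"
    by (rule diff_eqI) (simp add: algebra_simps)
  have "mm (ev (blk k)) d = M2 (d0 + k * d2) (d1 + k * d3) (d0 + (k + 1) * d2) (d1 + (k + 1) * d3)"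
    by (simp add: M2 mm_def ev_blk)
  thus ?thesis using 1 2 3 4 M2 by (simp only: ldiv_def m2.sel)
qed

lemma pw_Suc_q: "pw c b p (Suc q) = mm (pw c b p q) (ev (blk b))"
proof -
  have "replicate p c @ replicate (Suc q) b = (replicate p c @ replicate q b) @ [b]"
    by (simp add: replicate_append_same[symmetric])
  thus ?thesis by (simp only: pw_def ev_append map_append concat_append mm_assoc) simp
qed
lemma pw_Suc_p: "pw c b (Suc p) q = mm (ev (blk c)) (pw c b p q)"
  by (simp add: pw_def ev_append)
lemma det1_pw: "det1 (pw c b p q)" by (simp add: pw_def det1_ev)
lemma ur_pw: "p \<ge> 1 \<Longrightarrow> ur Nstd (pw c b p q)"
proof -
  assume "p \<ge> 1" then obtain p' where "p = Suc p'" by (cases p) auto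
  hence "concat (map blk (replicate p c @ replicate q b)) = True # (replicate c False @ concat (map blk (replicate p' c @ replicate q b)))"
    by (simp add: blk_def)
  thus ?thesis unfolding pw_def ur_ev by simp
qed
lemma pw_inj: "pw c b p j = pw c b p j' \<Longrightarrow> j = j'"
proof -
  assume "pw c b p j = pw c b p j'"
  hence "concat (map blk (replicate p c @ replicate j b)) = concat (map blk (replicate p c @ replicate j' b))"
    unfolding pw_def by (rule ev_inj)
  hence "length (concat (map blk (replicate p c @ replicate j b))) = length (concat (map blk (replicate p c @ replicate j' b)))"
    by simp
  hence "j * (b + 1) = j' * (b + 1)" by (simp add: length_concat blk_def sum_list_replicate algebra_simps)
  thus "j = j'" by (metis add_eq_0_iff_both_eq_0 mult_cancel2 zero_neq_one)
qed

lemma not_prec_e_pw0: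
  assumes "b \<noteq> c" "p \<ge> 1" shows "\<not> prec_e Nstd (ev (blk b)) (pw c b p 0)"
proof
  assume "prec_e Nstd (ev (blk b)) (pw c b p 0)"
  then obtain g where g: "det1 g" "mm g (ev (blk b)) = pw c b p 0"
    using prec_e_inv det1_ev det1_pw by blast
  obtain wg where wg: "ev wg = g" using word_exists g(1) by blast
  obtain p' where p': "p = Suc p'" using assms(2) by (cases p) auto
  have "replicate p c @ replicate 0 b = replicate p' c @ [c]" using p' by (simp add: replicate_append_same)
  hence "ev (wg @ blk b) = ev (concat (map blk (replicate p' c)) @ blk c)"
    using g wg by (simp add: pw_def ev_append)
  hence "wg @ blk b = concat (map blk (replicate p' c)) @ blk c" by (rule ev_inj)
  hence "b = c" by (rule last_block)
  thus False using assms(1) by simp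
qed

lemma pw_ne: "j \<noteq> j' \<Longrightarrow> pw c b p j \<noteq> pw c b p j'"
  using pw_inj by blast


definition Expo :: "real set \<Rightarrow> (nat \<Rightarrow> real) set" where
  "Expo G = {f. \<exists>F a. finite F \<and> F \<subseteq> G \<and> (\<forall>n. f n = (\<Sum>r\<in>F. a r * r ^ n))}"

lemma dom_lim:
  fixes F :: "real set" and a :: "real \<Rightarrow> real"
  assumes F: "finite F" "F \<subseteq> {0<..}" and r0: "r0 \<in> F" "a r0 \<noteq> 0"
    and mx: "\<forall>r\<in>F. a r \<noteq> 0 \<longrightarrow> r \<le> r0"
  shows "(\<lambda>n. (\<Sum>r\<in>F. a r * r ^ n) / r0 ^ n) \<longlonglongrightarrow> a r0"
proof -
  have pos: "r0 > 0" using F r0 by auto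
  have eq: "(\<lambda>n. (\<Sum>r\<in>F. a r * r ^ n) / r0 ^ n) = (\<lambda>n. \<Sum>r\<in>F. a r * (r / r0) ^ n)"
  proof (rule ext)
    fix n
    show "(\<Sum>r\<in>F. a r * r ^ n) / r0 ^ n = (\<Sum>r\<in>F. a r * (r / r0) ^ n)"
      unfolding sum_divide_distrib by (rule sum.cong) (simp_all add: power_divide)
  qed
  have lim: "(\<lambda>n. a r * (r / r0) ^ n) \<longlonglongrightarrow> (if r = r0 then a r0 else 0)" if r: "r \<in> F" for r
  proof (cases "r = r0")
    case True then show ?thesis using pos by simp
  next
    case False
    show ?thesis
    proof (cases "a r = 0")
      case True then show ?thesis using False by simp
    next
      case nz: False
      have "r < r0" using mx r nz False by force
      moreover have "r > 0" using F r by auto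
      ultimately have "norm (r / r0) < 1" using pos by (simp add: abs_of_pos)
      hence "(\<lambda>n. (r / r0) ^ n) \<longlonglongrightarrow> 0" by (rule LIMSEQ_power_zero)
      hence "(\<lambda>n. a r * (r / r0) ^ n) \<longlonglongrightarrow> a r * 0" by (intro tendsto_mult tendsto_const)
      thus ?thesis using False by simp
    qed
  qed
  have "(\<lambda>n. \<Sum>r\<in>F. a r * (r / r0) ^ n) \<longlonglongrightarrow> (\<Sum>r\<in>F. if r = r0 then a r0 else 0)"
    by (rule tendsto_sum) (rule lim)
  also have "(\<Sum>r\<in>F. if r = r0 then a r0 else 0) = a r0" using F r0 by simp
  finally show ?thesis unfolding eq .
qed

lemma sum_sign:
  fixes F :: "real set" and a :: "real \<Rightarrow> real"
  assumes F: "finite F" "F \<subseteq> {0<..}" and ex: "\<exists>r\<in>F. a r \<noteq> 0"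
  shows "eventually (\<lambda>n. (\<Sum>r\<in>F. a r * r ^ n) > 0) sequentially \<or>
         eventually (\<lambda>n. (\<Sum>r\<in>F. a r * r ^ n) < 0) sequentially"
proof -
  define Z where "Z = {r\<in>F. a r \<noteq> 0}"
  have Zf: "finite Z" "Z \<noteq> {}" using F ex by (auto simp: Z_def)
  define r0 where "r0 = Max Z"
  have r0Z: "r0 \<in> Z" using Zf by (simp add: r0_def)
  have r0: "r0 \<in> F" "a r0 \<noteq> 0" using r0Z by (auto simp: Z_def)
  have mx: "\<forall>r\<in>F. a r \<noteq> 0 \<longrightarrow> r \<le> r0" using Zf by (auto simp: r0_def Z_def)
  have pos: "r0 > 0" using F r0 by auto
  have L: "(\<lambda>n. (\<Sum>r\<in>F. a r * r ^ n) / r0 ^ n) \<longlonglongrightarrow> a r0" by (rule dom_lim[OF F r0 mx])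
  show ?thesis
  proof (cases "a r0 > 0")
    case True
    have "eventually (\<lambda>n. (\<Sum>r\<in>F. a r * r ^ n) / r0 ^ n > 0) sequentially"
      using order_tendstoD(1)[OF L True] .
    hence "eventually (\<lambda>n. (\<Sum>r\<in>F. a r * r ^ n) > 0) sequentially"
      by eventually_elim (use pos in \<open>simp add: zero_less_divide_iff\<close>)
    thus ?thesis ..
  next
    case False
    hence neg: "a r0 < 0" using r0 by simp
    have "eventually (\<lambda>n. (\<Sum>r\<in>F. a r * r ^ n) / r0 ^ n < 0) sequentially"
      using order_tendstoD(2)[OF L neg] .
    hence "eventually (\<lambda>n. (\<Sum>r\<in>F. a r * r ^ n) < 0) sequentially"
      by eventually_elim (use pos in \<open>simp add: divide_less_0_iff\<close>)
    thus ?thesis ..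
  qed
qed

lemma sum_zero_coeffs:
  fixes F :: "real set" and a :: "real \<Rightarrow> real"
  assumes F: "finite F" "F \<subseteq> {0<..}"
    and z: "eventually (\<lambda>n. (\<Sum>r\<in>F. a r * r ^ n) = 0) sequentially"
  shows "\<forall>r\<in>F. a r = 0"
proof (rule ccontr)
  assume "\<not> ?thesis"
  hence "\<exists>r\<in>F. a r \<noteq> 0" by auto
  from sum_sign[OF F this] show False
  proof
    assume "eventually (\<lambda>n. (\<Sum>r\<in>F. a r * r ^ n) > 0) sequentially"
    with z have "eventually (\<lambda>n. False) sequentially" by eventually_elim simp
    thus False by simp
  next
    assume "eventually (\<lambda>n. (\<Sum>r\<in>F. a r * r ^ n) < 0) sequentially"
    with z have "eventually (\<lambda>n. False) sequentially" by eventually_elim simp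
    thus False by simp
  qed
qed

lemma Ex_sign:
  assumes G: "G \<subseteq> {0<..}" and f: "f \<in> Expo G"
  shows "(\<forall>n. f n = 0) \<or> eventually (\<lambda>n. f n > 0) sequentially \<or> eventually (\<lambda>n. f n < 0) sequentially"
proof -
  obtain F a where Fa: "finite F" "F \<subseteq> G" "\<forall>n. f n = (\<Sum>r\<in>F. a r * r ^ n)"
    using f by (auto simp: Expo_def)
  show ?thesis
  proof (cases "\<exists>r\<in>F. a r \<noteq> 0")
    case True
    have "F \<subseteq> {0<..}" using Fa G by auto
    from sum_sign[OF Fa(1) this True] show ?thesis using Fa(3) by simp
  next
    case False then show ?thesis using Fa(3) by simp
  qed
qed

lemma Ex_mono: "G \<subseteq> H \<Longrightarrow> f \<in> Expo G \<Longrightarrow> f \<in> Expo H"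
  unfolding Expo_def by (auto intro: order_trans)

lemma Ex_const: "(\<lambda>n. x) \<in> Expo {1}"
  unfolding Expo_def by (intro CollectI exI[of _ "{1}"] exI[of _ "\<lambda>_. x"]) simp

lemma Ex_pow: "(\<lambda>n. x * r ^ n) \<in> Expo {r}"
  unfolding Expo_def by (intro CollectI exI[of _ "{r}"] exI[of _ "\<lambda>_. x"]) simp

lemma Ex_zero: "(\<lambda>n. 0) \<in> Expo G"
  unfolding Expo_def by (intro CollectI exI[of _ "{}"]) simp

lemma Ex_add:
  assumes f: "f \<in> Expo G" and g: "g \<in> Expo H"
  shows "(\<lambda>n. f n + g n) \<in> Expo (G \<union> H)"
proof -
  obtain F1 a1 where 1: "finite F1" "F1 \<subseteq> G" "\<forall>n. f n = (\<Sum>r\<in>F1. a1 r * r ^ n)"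
    using f by (auto simp: Expo_def)
  obtain F2 a2 where 2: "finite F2" "F2 \<subseteq> H" "\<forall>n. g n = (\<Sum>r\<in>F2. a2 r * r ^ n)"
    using g by (auto simp: Expo_def)
  define a where "a r = (if r \<in> F1 then a1 r else 0) + (if r \<in> F2 then a2 r else 0)" for r
  have E: "f n + g n = (\<Sum>r\<in>F1 \<union> F2. a r * r ^ n)" for n
  proof -
    have fin: "finite (F1 \<union> F2)" using 1 2 by simp
    have e1: "(\<Sum>r\<in>F1 \<union> F2. (if r \<in> F1 then a1 r * r ^ n else 0)) = (\<Sum>r\<in>F1. a1 r * r ^ n)"
      using fin by (simp add: sum.If_cases Int_absorb1)
    have e2: "(\<Sum>r\<in>F1 \<union> F2. (if r \<in> F2 then a2 r * r ^ n else 0)) = (\<Sum>r\<in>F2. a2 r * r ^ n)"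
      using fin by (simp add: sum.If_cases Int_absorb1)
    have "(\<Sum>r\<in>F1 \<union> F2. a r * r ^ n) = (\<Sum>r\<in>F1 \<union> F2. (if r \<in> F1 then a1 r * r ^ n else 0) + (if r \<in> F2 then a2 r * r ^ n else 0))"
      by (rule sum.cong) (auto simp: a_def algebra_simps)
    also have "\<dots> = (\<Sum>r\<in>F1. a1 r * r ^ n) + (\<Sum>r\<in>F2. a2 r * r ^ n)"
      by (simp only: sum.distrib e1 e2)
    finally show ?thesis using 1 2 by simp
  qed
  have "finite (F1 \<union> F2)" "F1 \<union> F2 \<subseteq> G \<union> H" using 1 2 by auto
  thus ?thesis unfolding Expo_def using E by (intro CollectI exI[of _ "F1 \<union> F2"] exI[of _ a] conjI allI) auto
qed

definition setmul :: "real set \<Rightarrow> real set \<Rightarrow> real set" where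
  "setmul G H = {x * y |x y. x \<in> G \<and> y \<in> H}"

lemma Ex_mult:
  assumes f: "f \<in> Expo G" and g: "g \<in> Expo H"
  shows "(\<lambda>n. f n * g n) \<in> Expo (setmul G H)"
proof -
  obtain F1 a1 where 1: "finite F1" "F1 \<subseteq> G" "\<forall>n. f n = (\<Sum>r\<in>F1. a1 r * r ^ n)"
    using f by (auto simp: Expo_def)
  obtain F2 a2 where 2: "finite F2" "F2 \<subseteq> H" "\<forall>n. g n = (\<Sum>r\<in>F2. a2 r * r ^ n)"
    using g by (auto simp: Expo_def)
  define h where "h = (\<lambda>p::real \<times> real. fst p * snd p)"
  define S where "S = F1 \<times> F2"
  define a where "a t = (\<Sum>p\<in>{p \<in> S. h p = t}. a1 (fst p) * a2 (snd p))" for t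
  have finS: "finite S" using 1 2 by (simp add: S_def)
  have E: "f n * g n = (\<Sum>t\<in>h ` S. a t * t ^ n)" for n
  proof -
    have "f n * g n = (\<Sum>r\<in>F1. \<Sum>s\<in>F2. (a1 r * r ^ n) * (a2 s * s ^ n))"
      using 1 2 by (simp add: sum_product)
    also have "\<dots> = (\<Sum>p\<in>F1 \<times> F2. (a1 (fst p) * fst p ^ n) * (a2 (snd p) * snd p ^ n))"
      by (simp add: sum.cartesian_product split_def)
    also have "\<dots> = (\<Sum>p\<in>S. (a1 (fst p) * a2 (snd p)) * h p ^ n)"
      unfolding S_def h_def
      by (rule sum.cong[OF refl]) (simp add: power_mult_distrib algebra_simps)
    also have "\<dots> = (\<Sum>t\<in>h ` S. \<Sum>p\<in>{p \<in> S. h p = t}. (a1 (fst p) * a2 (snd p)) * h p ^ n)"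
      using finS by (rule sum.image_gen)
    also have "\<dots> = (\<Sum>t\<in>h ` S. a t * t ^ n)"
      unfolding a_def sum_distrib_right
      by (rule sum.cong[OF refl], rule sum.cong) auto
    finally show ?thesis .
  qed
  have fin2: "finite (h ` S)" using finS by simp
  have sub: "h ` S \<subseteq> setmul G H"
  proof
    fix t assume "t \<in> h ` S"
    then obtain p where p: "p \<in> F1 \<times> F2" "t = fst p * snd p" by (auto simp: h_def S_def)
    have "fst p \<in> G" "snd p \<in> H" using p(1) 1(2) 2(2) by auto
    thus "t \<in> setmul G H" unfolding setmul_def using p(2)
      by (intro CollectI exI[of _ "fst p"] exI[of _ "snd p"]) simp
  qed
  show ?thesis unfolding Expo_def using E fin2 sub by (intro CollectI exI[of _ "h ` S"] exI[of _ a] conjI allI) auto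
qed

lemma Ex_scale: "f \<in> Expo G \<Longrightarrow> (\<lambda>n. x * f n) \<in> Expo G"
proof -
  assume "f \<in> Expo G"
  then obtain F a where 1: "finite F" "F \<subseteq> G" "\<forall>n. f n = (\<Sum>r\<in>F. a r * r ^ n)"
    by (auto simp: Expo_def)
  have "\<forall>n. x * f n = (\<Sum>r\<in>F. (x * a r) * r ^ n)" using 1 by (simp add: sum_distrib_left mult.assoc)
  thus ?thesis using 1 unfolding Expo_def by (intro CollectI exI[of _ F] exI[of _ "\<lambda>r. x * a r"] conjI) auto
qed

lemma Ex_diff: "f \<in> Expo G \<Longrightarrow> g \<in> Expo H \<Longrightarrow> (\<lambda>n. f n - g n) \<in> Expo (G \<union> H)"
proof -
  assume "f \<in> Expo G" "g \<in> Expo H"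
  hence "(\<lambda>n. f n + (-1) * g n) \<in> Expo (G \<union> H)" by (intro Ex_add Ex_scale)
  thus ?thesis by simp
qed


definition muq :: "nat \<Rightarrow> real" where
  "muq l = (real l + 2 + sqrt ((real l + 2)^2 - 4)) / 2"
definition nuq :: "nat \<Rightarrow> real" where
  "nuq l = (real l + 2 - sqrt ((real l + 2)^2 - 4)) / 2"

lemma sq_facts: assumes "l \<ge> 1"
  shows "sqrt ((real l + 2)^2 - 4) > 0" "(sqrt ((real l + 2)^2 - 4))^2 = (real l + 2)^2 - 4"
proof -
  have "real l + 2 \<ge> 3" using assms by simp
  hence "(real l + 2)^2 \<ge> 3^2" by (rule power_mono) simp
  hence "(real l + 2)^2 \<ge> 9" by simp
  thus "sqrt ((real l + 2)^2 - 4) > 0" "(sqrt ((real l + 2)^2 - 4))^2 = (real l + 2)^2 - 4" by auto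
qed

lemma munu: assumes "l \<ge> 1"
  shows "muq l * nuq l = 1" "muq l + nuq l = real l + 2" "muq l > 1" "nuq l > 0" "muq l \<noteq> nuq l"
    "muq l ^ 2 = (real l + 2) * muq l - 1" "nuq l ^ 2 = (real l + 2) * nuq l - 1" "nuq l = inverse (muq l)"
proof -
  define t where "t = real l + 2"
  define s where "s = sqrt ((real l + 2)^2 - 4)"
  have s: "s > 0" "s^2 = t^2 - 4" using sq_facts[OF assms] by (simp_all add: s_def t_def)
  have t: "t \<ge> 3" using assms by (simp add: t_def)
  have mu: "muq l = (t + s) / 2" and nu: "nuq l = (t - s) / 2" by (simp_all add: muq_def nuq_def t_def s_def)
  show 1: "muq l * nuq l = 1" unfolding mu nu using s by (simp add: field_simps power2_eq_square)
  have "muq l + nuq l = t" unfolding mu nu by (simp add: field_simps)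
  thus "muq l + nuq l = real l + 2" by (simp add: t_def)
  show "muq l > 1" unfolding mu using s t by simp
  hence "muq l > 0" by simp
  thus "nuq l > 0" using 1 by (metis zero_less_mult_pos zero_less_one)
  show "muq l \<noteq> nuq l" unfolding mu nu using s by simp
  show "muq l ^ 2 = (real l + 2) * muq l - 1" unfolding mu t_def[symmetric] using s
    by (simp add: field_simps power2_eq_square)
  show "nuq l ^ 2 = (real l + 2) * nuq l - 1" unfolding nu t_def[symmetric] using s
    by (simp add: field_simps power2_eq_square)
  show "nuq l = inverse (muq l)" using 1 by (simp add: inverse_unique)
qed

definition Uq :: "nat \<Rightarrow> nat \<Rightarrow> real" where
  "Uq l k = (muq l ^ k - nuq l ^ k) / (muq l - nuq l)"

lemma Uq_0: "Uq l 0 = 0" by (simp add: Uq_def)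
lemma Uq_1: "l \<ge> 1 \<Longrightarrow> Uq l 1 = 1" using munu(5) by (simp add: Uq_def)
lemma Uq_rec: assumes "l \<ge> 1" shows "Uq l (k + 2) = (real l + 2) * Uq l (k + 1) - Uq l k"
proof -
  have d: "muq l - nuq l \<noteq> 0" using munu(5)[OF assms] by simp
  have "muq l ^ (k + 2) = muq l ^ k * muq l ^ 2" by (simp only: power_add)
  also have "\<dots> = muq l ^ k * ((real l + 2) * muq l - 1)" by (simp only: munu(6)[OF assms])
  also have "\<dots> = (real l + 2) * (muq l ^ k * muq l) - muq l ^ k" by (simp add: algebra_simps)
  finally have a: "muq l ^ (k + 2) = (real l + 2) * muq l ^ (k + 1) - muq l ^ k" by simp
  have "nuq l ^ (k + 2) = nuq l ^ k * nuq l ^ 2" by (simp only: power_add)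
  also have "\<dots> = nuq l ^ k * ((real l + 2) * nuq l - 1)" by (simp only: munu(7)[OF assms])
  also have "\<dots> = (real l + 2) * (nuq l ^ k * nuq l) - nuq l ^ k" by (simp add: algebra_simps)
  finally have b: "nuq l ^ (k + 2) = (real l + 2) * nuq l ^ (k + 1) - nuq l ^ k" by simp
  have aux0: "\<And>A B C D t (e::real). e \<noteq> 0 \<Longrightarrow> ((t * A - B) - (t * C - D)) / e = t * ((A - C) / e) - (B - D) / e"
    by (simp add: field_simps)
  show ?thesis unfolding Uq_def a b aux0[OF d] ..
qed

definition Pm :: "nat \<Rightarrow> nat \<Rightarrow> nat m2" where
  "Pm l k = ev (concat (replicate k (blk l)))"

lemma Pm_Suc: "Pm l (Suc k) = mm (Pm l k) (ev (blk l))"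
proof -
  have "concat (replicate (Suc k) (blk l)) = concat (replicate k (blk l)) @ blk l"
    by (simp add: replicate_append_same[symmetric])
  thus ?thesis by (simp only: Pm_def ev_append)
qed

lemma pw_Pm: "pw c b p q = mm (Pm c p) (Pm b q)"
  by (simp add: pw_def Pm_def ev_append map_replicate)

lemma Pm_entries: assumes "l \<ge> 1"
  shows "real (e10 (Pm l k)) = Uq l k \<and> real (e01 (Pm l k)) = real l * Uq l k \<and>
         real (e00 (Pm l k)) = Uq l (k + 1) - (real l + 1) * Uq l k \<and>
         real (e11 (Pm l k)) = Uq l (k + 1) - Uq l k"
proof (induction k)
  case 0 then show ?case using Uq_0 Uq_1[OF assms] by (simp add: Pm_def I2_def)
next
  case (Suc k)
  have r: "Uq l (Suc (Suc k)) = (real l + 2) * Uq l (Suc k) - Uq l k" using Uq_rec[OF assms, of k] by simp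
  obtain x0 x1 x2 x3 where X: "Pm l k = M2 x0 x1 x2 x3" by (cases "Pm l k")
  have S: "Pm l (Suc k) = M2 (x0 + x1) (x0 * l + x1 * (l + 1)) (x2 + x3) (x2 * l + x3 * (l + 1))"
    by (simp add: Pm_Suc X mm_def ev_blk)
  have IH: "real x2 = Uq l k" "real x1 = real l * Uq l k" "real x0 = Uq l (Suc k) - (real l + 1) * Uq l k"
    "real x3 = Uq l (Suc k) - Uq l k" using Suc.IH X by auto
  have k2: "Suc k + 1 = Suc (Suc k)" by simp
  show ?case unfolding S m2.sel k2 r of_nat_add of_nat_mult IH by (simp add: algebra_simps)
qed

definition Bq :: "nat \<Rightarrow> nat \<Rightarrow> real set" where
  "Bq l a = {muq l ^ a, nuq l ^ a}"

lemma Uq_Ex: assumes "l \<ge> 1" shows "(\<lambda>n. Uq l (a * n + j)) \<in> Expo (Bq l a)"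
proof -
  define d where "d = muq l - nuq l"
  have "(\<lambda>n. (muq l ^ j / d) * (muq l ^ a) ^ n + (- (nuq l ^ j / d)) * (nuq l ^ a) ^ n) \<in> Expo ({muq l ^ a} \<union> {nuq l ^ a})"
    by (intro Ex_add Ex_pow)
  moreover have "(\<lambda>n. (muq l ^ j / d) * (muq l ^ a) ^ n + (- (nuq l ^ j / d)) * (nuq l ^ a) ^ n) = (\<lambda>n. Uq l (a * n + j))"
  proof (rule ext)
    fix n
    have p1: "(muq l ^ a) ^ n = muq l ^ (a * n)" "(nuq l ^ a) ^ n = nuq l ^ (a * n)" by (simp_all only: power_mult)
    show "(muq l ^ j / d) * (muq l ^ a) ^ n + (- (nuq l ^ j / d)) * (nuq l ^ a) ^ n = Uq l (a * n + j)"
      unfolding p1 Uq_def d_def power_add by (simp add: diff_divide_distrib algebra_simps)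
  qed
  ultimately show ?thesis by (simp add: Bq_def insert_commute)
qed

lemma Pm_Ex: assumes "l \<ge> 1"
  shows "(\<lambda>n. real (e00 (Pm l (a * n)))) \<in> Expo (Bq l a)" "(\<lambda>n. real (e01 (Pm l (a * n)))) \<in> Expo (Bq l a)"
        "(\<lambda>n. real (e10 (Pm l (a * n)))) \<in> Expo (Bq l a)" "(\<lambda>n. real (e11 (Pm l (a * n)))) \<in> Expo (Bq l a)"
proof -
  have U0: "(\<lambda>n. Uq l (a * n)) \<in> Expo (Bq l a)" using Uq_Ex[OF assms, of a 0] by simp
  have U1: "(\<lambda>n. Uq l (a * n + 1)) \<in> Expo (Bq l a)" using Uq_Ex[OF assms, of a 1] by simp
  have "(\<lambda>n. Uq l (a * n + 1) - (real l + 1) * Uq l (a * n)) \<in> Expo (Bq l a \<union> Bq l a)"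
    by (intro Ex_diff Ex_scale U0 U1)
  thus "(\<lambda>n. real (e00 (Pm l (a * n)))) \<in> Expo (Bq l a)" using Pm_entries[OF assms] by simp
  have "(\<lambda>n. real l * Uq l (a * n)) \<in> Expo (Bq l a)" by (intro Ex_scale U0)
  thus "(\<lambda>n. real (e01 (Pm l (a * n)))) \<in> Expo (Bq l a)" using Pm_entries[OF assms] by simp
  show "(\<lambda>n. real (e10 (Pm l (a * n)))) \<in> Expo (Bq l a)" using Pm_entries[OF assms] U0 by simp
  have "(\<lambda>n. Uq l (a * n + 1) - Uq l (a * n)) \<in> Expo (Bq l a \<union> Bq l a)"
    by (intro Ex_diff U0 U1)
  thus "(\<lambda>n. real (e11 (Pm l (a * n)))) \<in> Expo (Bq l a)" using Pm_entries[OF assms] by simp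
qed


datatype ex = EG nat | EZ | EO | EP ex ex | ET ex ex | EM ex ex

instance ex :: countable by countable_datatype

locale setting =
  fixes gb gi al be :: nat
  assumes gb: "gb \<ge> 1" and gi: "gi \<ge> 1" and gbi: "gb \<noteq> gi" and al: "al \<ge> 1" and be: "be \<ge> 1"
    and nomem: "\<forall>s t::int. even (s + t) \<longrightarrow> muq gi ^ al \<noteq> power_int (muq gi ^ al) s * power_int (muq gb ^ be) t"
begin

definition piN :: "nat \<Rightarrow> nat m2" where "piN n = pw gi gb (al * n) (be * n)"

primrec evx :: "ex \<Rightarrow> nat \<Rightarrow> nat" where
  "evx (EG i) n = (if i = 0 then e00 (piN n) else if i = 1 then e01 (piN n) else if i = 2 then e10 (piN n) else e11 (piN n))"
| "evx EZ n = 0"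
| "evx EO n = 1"
| "evx (EP x y) n = evx x n + evx y n"
| "evx (ET x y) n = evx x n * evx y n"
| "evx (EM x y) n = evx x n - evx y n"

definition mC :: real where "mC = muq gi ^ al"
definition mJ :: real where "mJ = muq gb ^ be"

definition Gam :: "real set" where
  "Gam = {x. \<exists>s t::int. even (s + t) \<and> x = power_int mC s * power_int mJ t}"

lemma mC_gt: "mC > 1" using munu(3)[OF gi] al unfolding mC_def by (simp add: one_less_power)
lemma mJ_gt: "mJ > 1" using munu(3)[OF gb] be unfolding mJ_def by (simp add: one_less_power)

lemma Gam_pos: "Gam \<subseteq> {0<..}"
  using mC_gt mJ_gt by (auto simp: Gam_def)

lemma one_Gam: "1 \<in> Gam"
  unfolding Gam_def by (intro CollectI exI[of _ 0]) simp

lemma Gam_mul: "setmul Gam Gam \<subseteq> Gam"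
proof
  fix x assume "x \<in> setmul Gam Gam"
  then obtain s t s' t' :: int where st: "even (s + t)" "even (s' + t')"
    and x: "x = (power_int mC s * power_int mJ t) * (power_int mC s' * power_int mJ t')"
    unfolding setmul_def Gam_def by blast
  have "x = power_int mC (s + s') * power_int mJ (t + t')"
    using mC_gt mJ_gt by (simp add: x power_int_add algebra_simps)
  moreover have "even ((s + s') + (t + t'))" using st by simp
  ultimately show "x \<in> Gam" unfolding Gam_def by blast
qed

lemma Gam_un: "Gam \<union> Gam = Gam" by simp

lemma Bq_Gam: "setmul (Bq gi al) (Bq gb be) \<subseteq> Gam"
proof
  fix x assume "x \<in> setmul (Bq gi al) (Bq gb be)"
  then obtain y z where yz: "y \<in> Bq gi al" "z \<in> Bq gb be" "x = y * z" unfolding setmul_def by blast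
  have nC: "nuq gi ^ al = power_int mC (-1)" unfolding mC_def using munu(8)[OF gi]
    by (simp add: power_int_minus power_inverse)
  have nJ: "nuq gb ^ be = power_int mJ (-1)" unfolding mJ_def using munu(8)[OF gb]
    by (simp add: power_int_minus power_inverse)
  have y: "\<exists>s::int. (s = 1 \<or> s = -1) \<and> y = power_int mC s"
    using yz(1) nC unfolding Bq_def mC_def by auto
  have z: "\<exists>t::int. (t = 1 \<or> t = -1) \<and> z = power_int mJ t"
    using yz(2) nJ unfolding Bq_def mJ_def by auto
  from y z obtain s t :: int where "(s = 1 \<or> s = -1)" "(t = 1 \<or> t = -1)" "y = power_int mC s" "z = power_int mJ t"
    by blast
  hence "even (s + t) \<and> x = power_int mC s * power_int mJ t" using yz(3) by auto
  thus "x \<in> Gam" unfolding Gam_def by blast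
qed

lemma mC_notin: "mC \<notin> Gam"
  using nomem unfolding Gam_def mC_def mJ_def by auto

lemma Gam_mono_setmul: "setmul (Bq gi al) (Bq gb be) \<union> setmul (Bq gi al) (Bq gb be) \<subseteq> Gam"
  using Bq_Gam by simp

lemma pi_entry_Ex:
  assumes "f1 = (\<lambda>n. real (x1 (Pm gi (al * n))))" "g1 = (\<lambda>n. real (y1 (Pm gb (be * n))))"
    "f2 = (\<lambda>n. real (x2 (Pm gi (al * n))))" "g2 = (\<lambda>n. real (y2 (Pm gb (be * n))))"
    "f1 \<in> Expo (Bq gi al)" "f2 \<in> Expo (Bq gi al)" "g1 \<in> Expo (Bq gb be)" "g2 \<in> Expo (Bq gb be)"
  shows "(\<lambda>n. f1 n * g1 n + f2 n * g2 n) \<in> Expo Gam"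
proof -
  have "(\<lambda>n. f1 n * g1 n + f2 n * g2 n) \<in> Expo (setmul (Bq gi al) (Bq gb be) \<union> setmul (Bq gi al) (Bq gb be))"
    by (intro Ex_add Ex_mult assms)
  thus ?thesis by (rule Ex_mono[OF Gam_mono_setmul])
qed

lemma piN_entries:
  "real (e00 (piN n)) = real (e00 (Pm gi (al * n))) * real (e00 (Pm gb (be * n))) + real (e01 (Pm gi (al * n))) * real (e10 (Pm gb (be * n)))"
  "real (e01 (piN n)) = real (e00 (Pm gi (al * n))) * real (e01 (Pm gb (be * n))) + real (e01 (Pm gi (al * n))) * real (e11 (Pm gb (be * n)))"
  "real (e10 (piN n)) = real (e10 (Pm gi (al * n))) * real (e00 (Pm gb (be * n))) + real (e11 (Pm gi (al * n))) * real (e10 (Pm gb (be * n)))"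
  "real (e11 (piN n)) = real (e10 (Pm gi (al * n))) * real (e01 (Pm gb (be * n))) + real (e11 (Pm gi (al * n))) * real (e11 (Pm gb (be * n)))"
  by (simp_all add: piN_def pw_Pm mm_def)

lemma EG_Ex: "(\<lambda>n. real (evx (EG i) n)) \<in> Expo Gam"
proof -
  note C = Pm_Ex[OF gi, of al] and J = Pm_Ex[OF gb, of be]
  have 0: "(\<lambda>n. real (e00 (piN n))) \<in> Expo Gam" unfolding piN_entries
    by (rule pi_entry_Ex[OF refl refl refl refl C(1) C(2) J(1) J(3)])
  have 1: "(\<lambda>n. real (e01 (piN n))) \<in> Expo Gam" unfolding piN_entries
    by (rule pi_entry_Ex[OF refl refl refl refl C(1) C(2) J(2) J(4)])
  have 2: "(\<lambda>n. real (e10 (piN n))) \<in> Expo Gam" unfolding piN_entries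
    by (rule pi_entry_Ex[OF refl refl refl refl C(3) C(4) J(1) J(3)])
  have 3: "(\<lambda>n. real (e11 (piN n))) \<in> Expo Gam" unfolding piN_entries
    by (rule pi_entry_Ex[OF refl refl refl refl C(3) C(4) J(2) J(4)])
  show ?thesis using 0 1 2 3 by (cases "i = 0"; cases "i = 1"; cases "i = 2") simp_all
qed

lemma evx_Ex: "\<exists>f \<in> Expo Gam. eventually (\<lambda>n. real (evx x n) = f n) sequentially"
proof (induction x)
  case (EG i) then show ?case using EG_Ex by (intro bexI[of _ "\<lambda>n. real (evx (EG i) n)"]) simp_all
next
  case EZ then show ?case using Ex_zero by (intro bexI[of _ "\<lambda>n. 0"]) simp_all
next
  case EO
  have "(\<lambda>n. 1) \<in> Expo Gam" using Ex_mono[OF _ Ex_const] one_Gam by blast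
  then show ?case by (intro bexI[of _ "\<lambda>n. 1"]) simp_all
next
  case (EP x y)
  then obtain f g where f: "f \<in> Expo Gam" "eventually (\<lambda>n. real (evx x n) = f n) sequentially"
    and g: "g \<in> Expo Gam" "eventually (\<lambda>n. real (evx y n) = g n) sequentially" by blast
  have "(\<lambda>n. f n + g n) \<in> Expo Gam" using Ex_add[OF f(1) g(1)] by simp
  moreover have "eventually (\<lambda>n. real (evx (EP x y) n) = f n + g n) sequentially"
    using f(2) g(2) by eventually_elim simp
  ultimately show ?case by (intro bexI[of _ "\<lambda>n. f n + g n"])
next
  case (ET x y)
  then obtain f g where f: "f \<in> Expo Gam" "eventually (\<lambda>n. real (evx x n) = f n) sequentially"
    and g: "g \<in> Expo Gam" "eventually (\<lambda>n. real (evx y n) = g n) sequentially" by blast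
  have "(\<lambda>n. f n * g n) \<in> Expo Gam" using Ex_mono[OF Gam_mul Ex_mult[OF f(1) g(1)]] .
  moreover have "eventually (\<lambda>n. real (evx (ET x y) n) = f n * g n) sequentially"
    using f(2) g(2) by eventually_elim simp
  ultimately show ?case by (intro bexI[of _ "\<lambda>n. f n * g n"])
next
  case (EM x y)
  then obtain f g where f: "f \<in> Expo Gam" "eventually (\<lambda>n. real (evx x n) = f n) sequentially"
    and g: "g \<in> Expo Gam" "eventually (\<lambda>n. real (evx y n) = g n) sequentially" by blast
  have d: "(\<lambda>n. f n - g n) \<in> Expo Gam" using Ex_diff[OF f(1) g(1)] by simp
  from Ex_sign[OF Gam_pos d]
  have "eventually (\<lambda>n. f n - g n \<ge> 0) sequentially \<or> eventually (\<lambda>n. f n - g n < 0) sequentially"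
    by (auto elim: eventually_mono)
  then show ?case
  proof
    assume "eventually (\<lambda>n. f n - g n \<ge> 0) sequentially"
    hence "eventually (\<lambda>n. real (evx (EM x y) n) = f n - g n) sequentially"
      using f(2) g(2) by eventually_elim (simp add: of_nat_diff)
    thus ?case using d by (intro bexI[of _ "\<lambda>n. f n - g n"])
  next
    assume "eventually (\<lambda>n. f n - g n < 0) sequentially"
    hence "eventually (\<lambda>n. real (evx (EM x y) n) = 0) sequentially"
      using f(2) g(2) by eventually_elim simp
    thus ?case using Ex_zero by (intro bexI[of _ "\<lambda>n. 0"])
  qed
qed

lemma trich: "eventually (\<lambda>n. evx x n < evx y n) sequentially \<or> eventually (\<lambda>n. evx x n = evx y n) sequentially
   \<or> eventually (\<lambda>n. evx y n < evx x n) sequentially"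
proof -
  obtain f where f: "f \<in> Expo Gam" "eventually (\<lambda>n. real (evx x n) = f n) sequentially" using evx_Ex by blast
  obtain g where g: "g \<in> Expo Gam" "eventually (\<lambda>n. real (evx y n) = g n) sequentially" using evx_Ex by blast
  have d: "(\<lambda>n. f n - g n) \<in> Expo Gam" using Ex_diff[OF f(1) g(1)] by simp
  from Ex_sign[OF Gam_pos d] show ?thesis
  proof (elim disjE)
    assume "\<forall>n. f n - g n = 0"
    hence "eventually (\<lambda>n. f n - g n = 0) sequentially" by simp
    hence "eventually (\<lambda>n. evx x n = evx y n) sequentially" using f(2) g(2) by eventually_elim simp
    thus ?thesis by blast
  next
    assume "eventually (\<lambda>n. f n - g n > 0) sequentially"
    hence "eventually (\<lambda>n. evx y n < evx x n) sequentially" using f(2) g(2) by eventually_elim simp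
    thus ?thesis by blast
  next
    assume "eventually (\<lambda>n. f n - g n < 0) sequentially"
    hence "eventually (\<lambda>n. evx x n < evx y n) sequentially" using f(2) g(2) by eventually_elim simp
    thus ?thesis by blast
  qed
qed

end


context setting
begin

definition eqv :: "ex \<Rightarrow> ex \<Rightarrow> bool" where
  "eqv x y \<longleftrightarrow> eventually (\<lambda>n. evx x n = evx y n) sequentially"

definition cls :: "ex \<Rightarrow> ex set" where "cls x = {y. eqv x y}"

definition KK :: "ex set set" where "KK = range cls"

lemma eqv_refl: "eqv x x" by (simp add: eqv_def)
lemma eqv_sym: "eqv x y \<Longrightarrow> eqv y x" unfolding eqv_def by (auto elim: eventually_mono)
lemma eqv_trans: assumes "eqv x y" "eqv y z" shows "eqv x z"
  using assms unfolding eqv_def by eventually_elim simp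

lemma cls_eq_iff: "cls x = cls y \<longleftrightarrow> eqv x y"
proof
  assume "cls x = cls y"
  hence "y \<in> cls x" using eqv_refl by (auto simp: cls_def)
  thus "eqv x y" by (simp add: cls_def)
next
  assume "eqv x y"
  thus "cls x = cls y" unfolding cls_def using eqv_trans eqv_sym by blast
qed

primrec numx :: "nat \<Rightarrow> ex" where
  "numx 0 = EZ"
| "numx (Suc k) = EP (numx k) EO"

lemma evx_numx [simp]: "evx (numx k) n = k" by (induction k) simp_all

lemma countable_KK: "countable KK" unfolding KK_def by simp

lemma infinite_KK: "infinite KK"
proof
  assume fin: "finite KK"
  have "inj (\<lambda>k. cls (numx k))"
  proof (rule injI)
    fix k l assume "cls (numx k) = cls (numx l)"
    hence "eventually (\<lambda>n. k = l) sequentially" by (simp add: cls_eq_iff eqv_def)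
    thus "k = l" by simp
  qed
  moreover have "range (\<lambda>k. cls (numx k)) \<subseteq> KK" by (auto simp: KK_def)
  ultimately have "infinite KK" using infinite_UNIV_nat
    by (meson finite_imageD finite_subset)
  thus False using fin by simp
qed

definition enc :: "nat \<Rightarrow> ex set" where "enc = from_nat_into KK"

lemma bij_enc: "bij_betw enc UNIV KK"
  unfolding enc_def by (rule bij_betw_from_nat_into[OF countable_KK infinite_KK])

definition rx :: "nat \<Rightarrow> ex" where "rx i = (SOME x. cls x = enc i)"
definition idx :: "ex \<Rightarrow> nat" where "idx x = inv_into UNIV enc (cls x)"

lemma cls_rx: "cls (rx i) = enc i"
proof -
  have "enc i \<in> KK" using bij_enc by (auto simp: bij_betw_def)
  then obtain x where "cls x = enc i" by (auto simp: KK_def)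
  thus ?thesis unfolding rx_def by (rule someI)
qed

lemma enc_idx: "enc (idx x) = cls x"
proof -
  have "cls x \<in> range enc" using bij_enc by (auto simp: bij_betw_def KK_def)
  thus ?thesis unfolding idx_def by (rule f_inv_into_f)
qed

lemma inj_enc: "inj enc" using bij_enc by (simp add: bij_betw_def)

lemma idx_rx [simp]: "idx (rx i) = i"
  using enc_idx[of "rx i"] cls_rx[of i] inj_enc by (simp add: inj_eq)

lemma rx_idx: "eqv (rx (idx x)) x"
  using cls_rx[of "idx x"] enc_idx[of x] by (simp add: cls_eq_iff)

lemma idx_eq_iff: "idx x = idx y \<longleftrightarrow> eqv x y"
proof
  assume "idx x = idx y"
  hence "cls x = cls y" using enc_idx by metis
  thus "eqv x y" by (simp add: cls_eq_iff)
next
  assume "eqv x y"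
  hence "cls x = cls y" by (simp add: cls_eq_iff)
  thus "idx x = idx y" by (simp add: idx_def)
qed

definition val :: "nat \<Rightarrow> nat \<Rightarrow> nat" where "val i = evx (rx i)"

definition MM :: "nat struc" where
  "MM = \<lparr>zr = idx EZ, on = idx EO, ad = (\<lambda>i j. idx (EP (rx i) (rx j))),
          mu = (\<lambda>i j. idx (ET (rx i) (rx j))),
          lq = (\<lambda>i j. eventually (\<lambda>n. val i n \<le> val j n) sequentially)\<rparr>"

lemma val_idx: "eventually (\<lambda>n. val (idx x) n = evx x n) sequentially"
  using rx_idx[of x] by (simp add: eqv_def val_def)

lemma eq_iff: "i = j \<longleftrightarrow> eventually (\<lambda>n. val i n = val j n) sequentially"
proof
  assume "eventually (\<lambda>n. val i n = val j n) sequentially"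
  hence "eqv (rx i) (rx j)" by (simp add: eqv_def val_def)
  hence "idx (rx i) = idx (rx j)" by (simp only: idx_eq_iff)
  thus "i = j" by (simp only: idx_rx)
qed simp

lemma val_zr: "eventually (\<lambda>n. val (zr MM) n = 0) sequentially"
  using val_idx[of EZ] by (simp add: MM_def)
lemma val_on: "eventually (\<lambda>n. val (on MM) n = 1) sequentially"
  using val_idx[of EO] by (simp add: MM_def)
lemma val_ad: "eventually (\<lambda>n. val (ad MM i j) n = val i n + val j n) sequentially"
  using val_idx[of "EP (rx i) (rx j)"] by (simp add: MM_def val_def)
lemma val_mu: "eventually (\<lambda>n. val (mu MM i j) n = val i n * val j n) sequentially"
  using val_idx[of "ET (rx i) (rx j)"] by (simp add: MM_def val_def)
lemma lq_iff: "lq MM i j \<longleftrightarrow> eventually (\<lambda>n. val i n \<le> val j n) sequentially"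
  by (simp add: MM_def)

lemma trichM: "eventually (\<lambda>n. val i n < val j n) sequentially \<or> eventually (\<lambda>n. val i n = val j n) sequentially
   \<or> eventually (\<lambda>n. val j n < val i n) sequentially"
  unfolding val_def by (rule trich)

lemma not_lq: "\<not> lq MM i j \<Longrightarrow> eventually (\<lambda>n. val j n < val i n) sequentially"
proof -
  assume h: "\<not> lq MM i j"
  from trichM[of i j] show ?thesis
  proof (elim disjE)
    assume "eventually (\<lambda>n. val i n < val j n) sequentially"
    hence "lq MM i j" unfolding lq_iff by (rule eventually_mono) simp
    thus ?thesis using h by simp
  next
    assume "eventually (\<lambda>n. val i n = val j n) sequentially"
    hence "lq MM i j" unfolding lq_iff by (rule eventually_mono) simp
    thus ?thesis using h by simp
  qed
qed

lemma val_num: "eventually (\<lambda>n. val (numM MM k) n = k) sequentially"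
proof (induction k)
  case 0 then show ?case using val_zr by simp
next
  case (Suc k)
  show ?case using Suc val_ad[of "numM MM k" "on MM"] val_on by eventually_elim simp
qed

definition envN :: "(nat \<Rightarrow> nat) \<Rightarrow> nat \<Rightarrow> nat \<Rightarrow> nat" where
  "envN e n = (\<lambda>v. val (e v) n)"

lemma evt_transfer: "eventually (\<lambda>n. val (evt MM e t) n = evt Nstd (envN e n) t) sequentially"
proof (induction t)
  case (Var i) then show ?case by (simp add: envN_def)
next
  case Zero then show ?case using val_zr by (simp add: Nstd_def)
next
  case One then show ?case using val_on by (simp add: Nstd_def)
next
  case (Plus s t)
  show ?case using Plus.IH val_ad[of "evt MM e s" "evt MM e t"]
    by eventually_elim (simp add: Nstd_def)
next
  case (Times s t)
  show ?case using Times.IH val_mu[of "evt MM e s" "evt MM e t"]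
    by eventually_elim (simp add: Nstd_def)
qed

lemma dec_const:
  assumes "eventually (\<lambda>n. R n = c) sequentially"
  shows "(eventually R sequentially \<longleftrightarrow> c) \<and> (eventually R sequentially \<or> eventually (\<lambda>n. \<not> R n) sequentially)"
proof (cases c)
  case True
  hence "eventually R sequentially" using assms by (auto elim: eventually_mono)
  thus ?thesis using True by simp
next
  case False
  hence n: "eventually (\<lambda>n. \<not> R n) sequentially" using assms by (auto elim: eventually_mono)
  have "\<not> eventually R sequentially"
  proof
    assume "eventually R sequentially"
    with n have "eventually (\<lambda>n. False) sequentially" by eventually_elim simp
    thus False by simp
  qed
  thus ?thesis using n False by simp
qed

lemma dec_get:
  assumes "eventually P sequentially \<or> eventually (\<lambda>n. \<not> P n) sequentially"
  shows "eventually (\<lambda>n. P n = eventually P sequentially) sequentially"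
  using assms
proof
  assume h: "eventually P sequentially"
  thus ?thesis by (auto elim: eventually_mono)
next
  assume h: "eventually (\<lambda>n. \<not> P n) sequentially"
  have "\<not> eventually P sequentially"
  proof
    assume "eventually P sequentially"
    with h have "eventually (\<lambda>n. False) sequentially" by eventually_elim simp
    thus False by simp
  qed
  thus ?thesis using h by (auto elim: eventually_mono)
qed

lemma un_dec:
  assumes "eventually P sequentially \<or> eventually (\<lambda>n. \<not> P n) sequentially"
  shows "(eventually (\<lambda>n. f (P n)) sequentially \<longleftrightarrow> f (eventually P sequentially)) \<and>
    (eventually (\<lambda>n. f (P n)) sequentially \<or> eventually (\<lambda>n. \<not> f (P n)) sequentially)"
proof -
  have "eventually (\<lambda>n. f (P n) = f (eventually P sequentially)) sequentially"
    using dec_get[OF assms] by eventually_elim simp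
  thus ?thesis by (rule dec_const)
qed

lemma bin_dec:
  assumes "eventually P sequentially \<or> eventually (\<lambda>n. \<not> P n) sequentially"
    "eventually Q sequentially \<or> eventually (\<lambda>n. \<not> Q n) sequentially"
  shows "(eventually (\<lambda>n. f (P n) (Q n)) sequentially \<longleftrightarrow> f (eventually P sequentially) (eventually Q sequentially)) \<and>
    (eventually (\<lambda>n. f (P n) (Q n)) sequentially \<or> eventually (\<lambda>n. \<not> f (P n) (Q n)) sequentially)"
proof -
  have "eventually (\<lambda>n. f (P n) (Q n) = f (eventually P sequentially) (eventually Q sequentially)) sequentially"
    using dec_get[OF assms(1)] dec_get[OF assms(2)] by eventually_elim simp
  thus ?thesis by (rule dec_const)
qed

lemma qfree_transfer:
  "qfree p \<Longrightarrow> (sat MM e p \<longleftrightarrow> eventually (\<lambda>n. sat Nstd (envN e n) p) sequentially) \<and>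
     (eventually (\<lambda>n. sat Nstd (envN e n) p) sequentially \<or> eventually (\<lambda>n. \<not> sat Nstd (envN e n) p) sequentially)"
proof (induction p)
  case (Eq s t)
  let ?x = "evt MM e s" and ?y = "evt MM e t"
  note Tx = evt_transfer[of e s] and Ty = evt_transfer[of e t]
  have 1: "sat MM e (Eq s t) \<longleftrightarrow> eventually (\<lambda>n. val ?x n = val ?y n) sequentially"
    unfolding sat.simps by (rule eq_iff)
  have A: "eventually (\<lambda>n. val ?x n = val ?y n) sequentially \<longleftrightarrow> eventually (\<lambda>n. sat Nstd (envN e n) (Eq s t)) sequentially"
  proof
    assume "eventually (\<lambda>n. val ?x n = val ?y n) sequentially"
    with Tx Ty show "eventually (\<lambda>n. sat Nstd (envN e n) (Eq s t)) sequentially" by eventually_elim simp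
  next
    assume "eventually (\<lambda>n. sat Nstd (envN e n) (Eq s t)) sequentially"
    with Tx Ty show "eventually (\<lambda>n. val ?x n = val ?y n) sequentially" by eventually_elim simp
  qed
  have B: "eventually (\<lambda>n. \<not> sat Nstd (envN e n) (Eq s t)) sequentially" 
    if "eventually (\<lambda>n. val ?x n \<noteq> val ?y n) sequentially"
    using that Tx Ty by eventually_elim simp
  have "eventually (\<lambda>n. val ?x n = val ?y n) sequentially \<or> eventually (\<lambda>n. val ?x n \<noteq> val ?y n) sequentially"
    using trichM[of ?x ?y] by (elim disjE) (simp_all add: eventually_mono)
  then show ?case using 1 A B by blast
next
  case (Leq s t)
  let ?x = "evt MM e s" and ?y = "evt MM e t"
  note Tx = evt_transfer[of e s] and Ty = evt_transfer[of e t]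
  have 1: "sat MM e (Leq s t) \<longleftrightarrow> eventually (\<lambda>n. val ?x n \<le> val ?y n) sequentially"
    unfolding sat.simps by (rule lq_iff)
  have A: "eventually (\<lambda>n. val ?x n \<le> val ?y n) sequentially \<longleftrightarrow> eventually (\<lambda>n. sat Nstd (envN e n) (Leq s t)) sequentially"
  proof
    assume "eventually (\<lambda>n. val ?x n \<le> val ?y n) sequentially"
    with Tx Ty show "eventually (\<lambda>n. sat Nstd (envN e n) (Leq s t)) sequentially" by eventually_elim (simp add: Nstd_def)
  next
    assume "eventually (\<lambda>n. sat Nstd (envN e n) (Leq s t)) sequentially"
    with Tx Ty show "eventually (\<lambda>n. val ?x n \<le> val ?y n) sequentially" by eventually_elim (simp add: Nstd_def)
  qed
  have B: "eventually (\<lambda>n. \<not> sat Nstd (envN e n) (Leq s t)) sequentially" 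
    if "eventually (\<lambda>n. \<not> val ?x n \<le> val ?y n) sequentially"
    using that Tx Ty by eventually_elim (simp add: Nstd_def)
  have "eventually (\<lambda>n. val ?x n \<le> val ?y n) sequentially \<or> eventually (\<lambda>n. \<not> val ?x n \<le> val ?y n) sequentially"
    using trichM[of ?x ?y] by (elim disjE) (simp_all add: eventually_mono)
  then show ?case using 1 A B by blast
next
  case (Neg p)
  hence IH: "(sat MM e p \<longleftrightarrow> eventually (\<lambda>n. sat Nstd (envN e n) p) sequentially)"
    "eventually (\<lambda>n. sat Nstd (envN e n) p) sequentially \<or> eventually (\<lambda>n. \<not> sat Nstd (envN e n) p) sequentially"
    by auto
  show ?case unfolding sat.simps using un_dec[OF IH(2), of Not] IH(1) by blast
next
  case (Conj p q)
  hence IH: "(sat MM e p \<longleftrightarrow> eventually (\<lambda>n. sat Nstd (envN e n) p) sequentially)"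
    "eventually (\<lambda>n. sat Nstd (envN e n) p) sequentially \<or> eventually (\<lambda>n. \<not> sat Nstd (envN e n) p) sequentially"
    "(sat MM e q \<longleftrightarrow> eventually (\<lambda>n. sat Nstd (envN e n) q) sequentially)"
    "eventually (\<lambda>n. sat Nstd (envN e n) q) sequentially \<or> eventually (\<lambda>n. \<not> sat Nstd (envN e n) q) sequentially"
    by auto
  show ?case unfolding sat.simps using bin_dec[OF IH(2) IH(4), of "(\<and>)"] IH(1,3) by blast
next
  case (Disj p q)
  hence IH: "(sat MM e p \<longleftrightarrow> eventually (\<lambda>n. sat Nstd (envN e n) p) sequentially)"
    "eventually (\<lambda>n. sat Nstd (envN e n) p) sequentially \<or> eventually (\<lambda>n. \<not> sat Nstd (envN e n) p) sequentially"
    "(sat MM e q \<longleftrightarrow> eventually (\<lambda>n. sat Nstd (envN e n) q) sequentially)"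
    "eventually (\<lambda>n. sat Nstd (envN e n) q) sequentially \<or> eventually (\<lambda>n. \<not> sat Nstd (envN e n) q) sequentially"
    by auto
  show ?case unfolding sat.simps using bin_dec[OF IH(2) IH(4), of "(\<or>)"] IH(1,3) by blast
next
  case (Imp p q)
  hence IH: "(sat MM e p \<longleftrightarrow> eventually (\<lambda>n. sat Nstd (envN e n) p) sequentially)"
    "eventually (\<lambda>n. sat Nstd (envN e n) p) sequentially \<or> eventually (\<lambda>n. \<not> sat Nstd (envN e n) p) sequentially"
    "(sat MM e q \<longleftrightarrow> eventually (\<lambda>n. sat Nstd (envN e n) q) sequentially)"
    "eventually (\<lambda>n. sat Nstd (envN e n) q) sequentially \<or> eventually (\<lambda>n. \<not> sat Nstd (envN e n) q) sequentially"
    by auto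
  show ?case unfolding sat.simps using bin_dec[OF IH(2) IH(4), of "(\<longrightarrow>)"] IH(1,3) by blast
qed simp_all

lemma universal_transfer:
  "universal p \<Longrightarrow> (\<forall>env. sat Nstd env p) \<Longrightarrow> sat MM e p"
proof (induction p arbitrary: e rule: universal.induct)
  case (1 p)
  have "eventually (\<lambda>n. sat Nstd (envN e n) p) sequentially" using 1 by simp
  thus ?case using qfree_transfer[OF 1(1)] by blast
next
  case (2 p x)
  have "\<forall>env. sat Nstd env p"
  proof
    fix env
    have "sat Nstd env (All x p)" using 2 by blast
    hence "sat Nstd (env(x := env x)) p" by (simp only: sat.simps)
    thus "sat Nstd env p" by (simp only: fun_upd_triv)
  qed
  thus ?case using 2 by simp
qed

end


context setting
begin

lemma ax_univ:
  assumes "universal p" "\<forall>env. sat Nstd env p"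
  shows "sat MM e p"
  using universal_transfer[OF assms] .

lemma PAminus_MM: "PAminus MM"
proof -
  let ?x = "Var 0" and ?y = "Var 1" and ?z = "Var 2"
  let ?Lt = "\<lambda>a b. Conj (Leq a b) (Neg (Eq a b))"
  have A1: "\<forall>x y z. ad MM (ad MM x y) z = ad MM x (ad MM y z)"
  proof -
    have U: "universal (All 0 (All 1 (All 2 (Eq (Plus (Plus (Var 0) (Var 1)) (Var 2)) (Plus (Var 0) (Plus (Var 1) (Var 2)))))))" by (intro universal.intros) simp
    have N: "\<forall>env. sat Nstd env (All 0 (All 1 (All 2 (Eq (Plus (Plus (Var 0) (Var 1)) (Var 2)) (Plus (Var 0) (Plus (Var 1) (Var 2)))))))" by (simp add: Nstd_def)
    have S: "sat MM e (All 0 (All 1 (All 2 (Eq (Plus (Plus (Var 0) (Var 1)) (Var 2)) (Plus (Var 0) (Plus (Var 1) (Var 2)))))))" for e by (rule universal_transfer[OF U N])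
    show ?thesis using S[of undefined] by (simp add: lt_def)
  qed
  have A2: "\<forall>x y. ad MM x y = ad MM y x"
  proof -
    have U: "universal (All 0 (All 1 (Eq (Plus (Var 0) (Var 1)) (Plus (Var 1) (Var 0)))))" by (intro universal.intros) simp
    have N: "\<forall>env. sat Nstd env (All 0 (All 1 (Eq (Plus (Var 0) (Var 1)) (Plus (Var 1) (Var 0)))))" by (simp add: Nstd_def)
    have S: "sat MM e (All 0 (All 1 (Eq (Plus (Var 0) (Var 1)) (Plus (Var 1) (Var 0)))))" for e by (rule universal_transfer[OF U N])
    show ?thesis using S[of undefined] by (simp add: lt_def)
  qed
  have A3: "\<forall>x y z. mu MM (mu MM x y) z = mu MM x (mu MM y z)"
  proof -
    have U: "universal (All 0 (All 1 (All 2 (Eq (Times (Times (Var 0) (Var 1)) (Var 2)) (Times (Var 0) (Times (Var 1) (Var 2)))))))" by (intro universal.intros) simp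
    have N: "\<forall>env. sat Nstd env (All 0 (All 1 (All 2 (Eq (Times (Times (Var 0) (Var 1)) (Var 2)) (Times (Var 0) (Times (Var 1) (Var 2)))))))" by (simp add: Nstd_def)
    have S: "sat MM e (All 0 (All 1 (All 2 (Eq (Times (Times (Var 0) (Var 1)) (Var 2)) (Times (Var 0) (Times (Var 1) (Var 2)))))))" for e by (rule universal_transfer[OF U N])
    show ?thesis using S[of undefined] by (simp add: lt_def)
  qed
  have A4: "\<forall>x y. mu MM x y = mu MM y x"
  proof -
    have U: "universal (All 0 (All 1 (Eq (Times (Var 0) (Var 1)) (Times (Var 1) (Var 0)))))" by (intro universal.intros) simp
    have N: "\<forall>env. sat Nstd env (All 0 (All 1 (Eq (Times (Var 0) (Var 1)) (Times (Var 1) (Var 0)))))" by (simp add: Nstd_def)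
    have S: "sat MM e (All 0 (All 1 (Eq (Times (Var 0) (Var 1)) (Times (Var 1) (Var 0)))))" for e by (rule universal_transfer[OF U N])
    show ?thesis using S[of undefined] by (simp add: lt_def)
  qed
  have A5: "\<forall>x y z. mu MM x (ad MM y z) = ad MM (mu MM x y) (mu MM x z)"
  proof -
    have U: "universal (All 0 (All 1 (All 2 (Eq (Times (Var 0) (Plus (Var 1) (Var 2))) (Plus (Times (Var 0) (Var 1)) (Times (Var 0) (Var 2)))))))" by (intro universal.intros) simp
    have N: "\<forall>env. sat Nstd env (All 0 (All 1 (All 2 (Eq (Times (Var 0) (Plus (Var 1) (Var 2))) (Plus (Times (Var 0) (Var 1)) (Times (Var 0) (Var 2)))))))" by (simp add: Nstd_def algebra_simps)
    have S: "sat MM e (All 0 (All 1 (All 2 (Eq (Times (Var 0) (Plus (Var 1) (Var 2))) (Plus (Times (Var 0) (Var 1)) (Times (Var 0) (Var 2)))))))" for e by (rule universal_transfer[OF U N])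
    show ?thesis using S[of undefined] by (simp add: algebra_simps)
  qed
  have A6: "\<forall>x. ad MM x (zr MM) = x"
  proof -
    have U: "universal (All 0 (Eq (Plus (Var 0) Zero) (Var 0)))" by (intro universal.intros) simp
    have N: "\<forall>env. sat Nstd env (All 0 (Eq (Plus (Var 0) Zero) (Var 0)))" by (simp add: Nstd_def)
    have S: "sat MM e (All 0 (Eq (Plus (Var 0) Zero) (Var 0)))" for e by (rule universal_transfer[OF U N])
    show ?thesis using S[of undefined] by (simp add: lt_def)
  qed
  have A7: "\<forall>x. mu MM x (zr MM) = zr MM"
  proof -
    have U: "universal (All 0 (Eq (Times (Var 0) Zero) Zero))" by (intro universal.intros) simp
    have N: "\<forall>env. sat Nstd env (All 0 (Eq (Times (Var 0) Zero) Zero))" by (simp add: Nstd_def)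
    have S: "sat MM e (All 0 (Eq (Times (Var 0) Zero) Zero))" for e by (rule universal_transfer[OF U N])
    show ?thesis using S[of undefined] by (simp add: lt_def)
  qed
  have A8: "\<forall>x. mu MM x (on MM) = x"
  proof -
    have U: "universal (All 0 (Eq (Times (Var 0) One) (Var 0)))" by (intro universal.intros) simp
    have N: "\<forall>env. sat Nstd env (All 0 (Eq (Times (Var 0) One) (Var 0)))" by (simp add: Nstd_def)
    have S: "sat MM e (All 0 (Eq (Times (Var 0) One) (Var 0)))" for e by (rule universal_transfer[OF U N])
    show ?thesis using S[of undefined] by (simp add: lt_def)
  qed
  have A9: "\<forall>x. lq MM x x"
  proof -
    have U: "universal (All 0 (Leq (Var 0) (Var 0)))" by (intro universal.intros) simp
    have N: "\<forall>env. sat Nstd env (All 0 (Leq (Var 0) (Var 0)))" by (simp add: Nstd_def)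
    have S: "sat MM e (All 0 (Leq (Var 0) (Var 0)))" for e by (rule universal_transfer[OF U N])
    show ?thesis using S[of undefined] by (simp add: lt_def)
  qed
  have A10: "\<forall>x y. lq MM x y \<and> lq MM y x \<longrightarrow> x = y"
  proof -
    have U: "universal (All 0 (All 1 (Imp (Conj (Leq (Var 0) (Var 1)) (Leq (Var 1) (Var 0))) (Eq (Var 0) (Var 1)))))" by (intro universal.intros) simp
    have N: "\<forall>env. sat Nstd env (All 0 (All 1 (Imp (Conj (Leq (Var 0) (Var 1)) (Leq (Var 1) (Var 0))) (Eq (Var 0) (Var 1)))))" by (simp add: Nstd_def)
    have S: "sat MM e (All 0 (All 1 (Imp (Conj (Leq (Var 0) (Var 1)) (Leq (Var 1) (Var 0))) (Eq (Var 0) (Var 1)))))" for e by (rule universal_transfer[OF U N])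
    show ?thesis using S[of undefined] by (simp add: lt_def)
  qed
  have A11: "\<forall>x y z. lq MM x y \<and> lq MM y z \<longrightarrow> lq MM x z"
  proof (intro allI impI)
    fix x y z assume h: "lq MM x y \<and> lq MM y z"
    hence "eventually (\<lambda>n. val x n \<le> val y n) sequentially" "eventually (\<lambda>n. val y n \<le> val z n) sequentially"
      by (simp_all add: lq_iff)
    hence "eventually (\<lambda>n. val x n \<le> val z n) sequentially" by eventually_elim simp
    thus "lq MM x z" by (simp add: lq_iff)
  qed
  have A12: "\<forall>x y. lq MM x y \<or> lq MM y x"
  proof -
    have U: "universal (All 0 (All 1 (Disj (Leq (Var 0) (Var 1)) (Leq (Var 1) (Var 0)))))" by (intro universal.intros) simp
    have N: "\<forall>env. sat Nstd env (All 0 (All 1 (Disj (Leq (Var 0) (Var 1)) (Leq (Var 1) (Var 0)))))" by (simp add: Nstd_def nat_le_linear)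
    have S: "sat MM e (All 0 (All 1 (Disj (Leq (Var 0) (Var 1)) (Leq (Var 1) (Var 0)))))" for e by (rule universal_transfer[OF U N])
    show ?thesis using S[of undefined] by (simp add: lt_def)
  qed
  have A13: "\<forall>x y z. lt MM x y \<longrightarrow> lt MM (ad MM x z) (ad MM y z)"
  proof -
    have U: "universal (All 0 (All 1 (All 2 (Imp (Conj (Leq (Var 0) (Var 1)) (Neg (Eq (Var 0) (Var 1)))) (Conj (Leq (Plus (Var 0) (Var 2)) (Plus (Var 1) (Var 2))) (Neg (Eq (Plus (Var 0) (Var 2)) (Plus (Var 1) (Var 2)))))))))" by (intro universal.intros) simp
    have N: "\<forall>env. sat Nstd env (All 0 (All 1 (All 2 (Imp (Conj (Leq (Var 0) (Var 1)) (Neg (Eq (Var 0) (Var 1)))) (Conj (Leq (Plus (Var 0) (Var 2)) (Plus (Var 1) (Var 2))) (Neg (Eq (Plus (Var 0) (Var 2)) (Plus (Var 1) (Var 2)))))))))" by (simp add: Nstd_def lt_def)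
    have S: "sat MM e (All 0 (All 1 (All 2 (Imp (Conj (Leq (Var 0) (Var 1)) (Neg (Eq (Var 0) (Var 1)))) (Conj (Leq (Plus (Var 0) (Var 2)) (Plus (Var 1) (Var 2))) (Neg (Eq (Plus (Var 0) (Var 2)) (Plus (Var 1) (Var 2)))))))))" for e by (rule universal_transfer[OF U N])
    show ?thesis using S[of undefined] by (simp add: lt_def)
  qed
  have A14: "\<forall>x y z. lt MM (zr MM) z \<and> lt MM x y \<longrightarrow> lt MM (mu MM x z) (mu MM y z)"
  proof -
    have U: "universal (All 0 (All 1 (All 2 (Imp (Conj (Conj (Leq Zero (Var 2)) (Neg (Eq Zero (Var 2)))) (Conj (Leq (Var 0) (Var 1)) (Neg (Eq (Var 0) (Var 1))))) (Conj (Leq (Times (Var 0) (Var 2)) (Times (Var 1) (Var 2))) (Neg (Eq (Times (Var 0) (Var 2)) (Times (Var 1) (Var 2)))))))))" by (intro universal.intros) simp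
    have N: "\<forall>env. sat Nstd env (All 0 (All 1 (All 2 (Imp (Conj (Conj (Leq Zero (Var 2)) (Neg (Eq Zero (Var 2)))) (Conj (Leq (Var 0) (Var 1)) (Neg (Eq (Var 0) (Var 1))))) (Conj (Leq (Times (Var 0) (Var 2)) (Times (Var 1) (Var 2))) (Neg (Eq (Times (Var 0) (Var 2)) (Times (Var 1) (Var 2)))))))))" by (simp add: Nstd_def lt_def)
    have S: "sat MM e (All 0 (All 1 (All 2 (Imp (Conj (Conj (Leq Zero (Var 2)) (Neg (Eq Zero (Var 2)))) (Conj (Leq (Var 0) (Var 1)) (Neg (Eq (Var 0) (Var 1))))) (Conj (Leq (Times (Var 0) (Var 2)) (Times (Var 1) (Var 2))) (Neg (Eq (Times (Var 0) (Var 2)) (Times (Var 1) (Var 2)))))))))" for e by (rule universal_transfer[OF U N])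
    show ?thesis using S[of undefined] by (simp add: lt_def)
  qed
  have A16: "lt MM (zr MM) (on MM)"
  proof -
    have U: "universal ((Conj (Leq Zero One) (Neg (Eq Zero One))))" by (intro universal.intros) simp
    have N: "\<forall>env. sat Nstd env ((Conj (Leq Zero One) (Neg (Eq Zero One))))" by (simp add: Nstd_def lt_def)
    have S: "sat MM e ((Conj (Leq Zero One) (Neg (Eq Zero One))))" for e by (rule universal_transfer[OF U N])
    show ?thesis using S[of undefined] by (simp add: lt_def)
  qed
  have A17: "\<forall>x. lq MM (zr MM) x"
  proof -
    have U: "universal (All 0 (Leq Zero (Var 0)))" by (intro universal.intros) simp
    have N: "\<forall>env. sat Nstd env (All 0 (Leq Zero (Var 0)))" by (simp add: Nstd_def)
    have S: "sat MM e (All 0 (Leq Zero (Var 0)))" for e by (rule universal_transfer[OF U N])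
    show ?thesis using S[of undefined] by (simp add: lt_def)
  qed
  have A18: "\<forall>x. lt MM (zr MM) x \<longrightarrow> lq MM (on MM) x"
  proof -
    have U: "universal (All 0 (Imp (Conj (Leq Zero (Var 0)) (Neg (Eq Zero (Var 0)))) (Leq One (Var 0))))" by (intro universal.intros) simp
    have N: "\<forall>env. sat Nstd env (All 0 (Imp (Conj (Leq Zero (Var 0)) (Neg (Eq Zero (Var 0)))) (Leq One (Var 0))))" by (simp add: Nstd_def lt_def)
    have S: "sat MM e (All 0 (Imp (Conj (Leq Zero (Var 0)) (Neg (Eq Zero (Var 0)))) (Leq One (Var 0))))" for e by (rule universal_transfer[OF U N])
    show ?thesis using S[of undefined] by (simp add: lt_def)
  qed
  have A15: "\<forall>x y. lq MM x y \<longrightarrow> (\<exists>z. ad MM x z = y)"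
  proof (intro allI impI)
    fix x y assume h: "lq MM x y"
    define z where "z = idx (EM (rx y) (rx x))"
    have "eventually (\<lambda>n. val (ad MM x z) n = val y n) sequentially"
      using h[unfolded lq_iff] val_ad[of x z] val_idx[of "EM (rx y) (rx x)"]
      by eventually_elim (simp add: z_def val_def)
    hence "ad MM x z = y" by (rule eq_iff[THEN iffD2])
    thus "\<exists>z. ad MM x z = y" by blast
  qed
  show ?thesis unfolding PAminus_def
    by (intro conjI A1 A2 A3 A4 A5 A6 A7 A8 A9 A10 A11 A12 A13 A14 A15 A16 A17 A18)
qed

lemma model_T_MM: "model_T MM"
  unfolding model_T_def holds_def
  using PAminus_MM universal_transfer by blast

end


lemma no_cancel:
  fixes F :: "real set" and a :: "real \<Rightarrow> real"
  assumes F: "finite F" "F \<subseteq> {0<..}" and m: "m \<notin> F" "m > 0" and w: "w > 0" "m \<noteq> w" and c: "c \<noteq> 0"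
  shows "\<not> eventually (\<lambda>n. (\<Sum>r\<in>F. a r * r ^ n) = c * m ^ n - c * w ^ n) sequentially"
proof
  assume ev: "eventually (\<lambda>n. (\<Sum>r\<in>F. a r * r ^ n) = c * m ^ n - c * w ^ n) sequentially"
  define F' where "F' = F \<union> {m, w}"
  define a' where "a' r = (if r \<in> F then a r else 0) - (if r = m then c else 0) + (if r = w then c else 0)" for r
  have fin: "finite F'" using F by (simp add: F'_def)
  have pos: "F' \<subseteq> {0<..}" using F m w by (auto simp: F'_def)
  have eq: "(\<Sum>r\<in>F'. a' r * r ^ n) = (\<Sum>r\<in>F. a r * r ^ n) - c * m ^ n + c * w ^ n" for n
  proof -
    have FF: "F' \<inter> F = F" by (auto simp: F'_def)
    have 1: "(\<Sum>r\<in>F'. (if r \<in> F then a r * r ^ n else 0)) = (\<Sum>r\<in>F. a r * r ^ n)"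
      using fin by (simp add: sum.If_cases FF)
    have 2: "(\<Sum>r\<in>F'. (if r = m then c * r ^ n else 0)) = c * m ^ n"
      using fin by (simp add: sum.delta F'_def)
    have 3: "(\<Sum>r\<in>F'. (if r = w then c * r ^ n else 0)) = c * w ^ n"
      using fin by (simp add: sum.delta F'_def)
    have "(\<Sum>r\<in>F'. a' r * r ^ n) = (\<Sum>r\<in>F'. (if r \<in> F then a r * r ^ n else 0) - (if r = m then c * r ^ n else 0) + (if r = w then c * r ^ n else 0))"
      by (rule sum.cong) (auto simp: a'_def algebra_simps)
    also have "\<dots> = (\<Sum>r\<in>F. a r * r ^ n) - c * m ^ n + c * w ^ n"
      by (simp only: sum.distrib sum_subtractf 1 2 3)
    finally show ?thesis .
  qed
  have "eventually (\<lambda>n. (\<Sum>r\<in>F'. a' r * r ^ n) = 0) sequentially"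
    using ev by eventually_elim (simp add: eq)
  hence "\<forall>r\<in>F'. a' r = 0" by (rule sum_zero_coeffs[OF fin pos])
  moreover have "m \<in> F'" by (simp add: F'_def)
  moreover have "a' m = - c" using m w by (simp add: a'_def)
  ultimately show False using c by simp
qed

context setting
begin

definition vm :: "nat m2 \<Rightarrow> nat \<Rightarrow> nat m2" where
  "vm a n = M2 (val (e00 a) n) (val (e01 a) n) (val (e10 a) n) (val (e11 a) n)"

lemma eq_via:
  assumes "eventually (\<lambda>n. val X n = f n) sequentially" "eventually (\<lambda>n. val Y n = g n) sequentially"
  shows "X = Y \<longleftrightarrow> eventually (\<lambda>n. f n = g n) sequentially"
proof
  assume "X = Y"
  thus "eventually (\<lambda>n. f n = g n) sequentially" using assms by (auto elim: eventually_elim2)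
next
  assume "eventually (\<lambda>n. f n = g n) sequentially"
  hence "eventually (\<lambda>n. val X n = val Y n) sequentially" using assms by eventually_elim simp
  thus "X = Y" by (rule eq_iff[THEN iffD2])
qed

lemma lq_via:
  assumes "eventually (\<lambda>n. val X n = f n) sequentially" "eventually (\<lambda>n. val Y n = g n) sequentially"
  shows "lq MM X Y \<longleftrightarrow> eventually (\<lambda>n. f n \<le> g n) sequentially"
proof
  assume "lq MM X Y"
  hence "eventually (\<lambda>n. val X n \<le> val Y n) sequentially" by (simp add: lq_iff)
  thus "eventually (\<lambda>n. f n \<le> g n) sequentially" using assms by eventually_elim simp
next
  assume "eventually (\<lambda>n. f n \<le> g n) sequentially"
  hence "eventually (\<lambda>n. val X n \<le> val Y n) sequentially" using assms by eventually_elim simp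
  thus "lq MM X Y" by (simp add: lq_iff)
qed

lemma ev_refl: "eventually (\<lambda>n. val X n = val X n) sequentially" by simp

lemma lq_mu: "lq MM (mu MM x y) (mu MM z w) \<longleftrightarrow> eventually (\<lambda>n. val x n * val y n \<le> val z n * val w n) sequentially"
  by (rule lq_via[OF val_mu val_mu])

lemma val_sp: "eventually (\<lambda>n. val (ad MM (mu MM x y) (mu MM z w)) n = val x n * val y n + val z n * val w n) sequentially"
  using val_ad[of "mu MM x y" "mu MM z w"] val_mu[of x y] val_mu[of z w] by eventually_elim simp

lemma m2_eq_iff: "a = b \<longleftrightarrow> eventually (\<lambda>n. vm a n = vm b n) sequentially"
proof -
  have "a = b \<longleftrightarrow> e00 a = e00 b \<and> e01 a = e01 b \<and> e10 a = e10 b \<and> e11 a = e11 b"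
    by (cases a; cases b) simp
  also have "\<dots> \<longleftrightarrow> eventually (\<lambda>n. val (e00 a) n = val (e00 b) n) sequentially \<and>
     eventually (\<lambda>n. val (e01 a) n = val (e01 b) n) sequentially \<and>
     eventually (\<lambda>n. val (e10 a) n = val (e10 b) n) sequentially \<and>
     eventually (\<lambda>n. val (e11 a) n = val (e11 b) n) sequentially"
    by (simp only: eq_iff[of "e00 a"] eq_iff[of "e01 a"] eq_iff[of "e10 a"] eq_iff[of "e11 a"])
  also have "\<dots> \<longleftrightarrow> eventually (\<lambda>n. vm a n = vm b n) sequentially"
    by (simp add: vm_def eventually_conj_iff[symmetric])
  finally show ?thesis .
qed

lemma sl2_iff: "sl2 MM a \<longleftrightarrow> eventually (\<lambda>n. det1 (vm a n)) sequentially"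
proof -
  have r: "eventually (\<lambda>n. val (ad MM (mu MM (e01 a) (e10 a)) (on MM)) n = val (e01 a) n * val (e10 a) n + 1) sequentially"
    using val_ad[of "mu MM (e01 a) (e10 a)" "on MM"] val_mu[of "e01 a" "e10 a"] val_on by eventually_elim simp
  show ?thesis unfolding sl2_def eq_via[OF val_mu r] by (simp add: det1_def vm_def)
qed

lemma mmul_iff: "mmul MM a b = c \<longleftrightarrow> eventually (\<lambda>n. mm (vm a n) (vm b n) = vm c n) sequentially"
proof -
  have "mmul MM a b = c \<longleftrightarrow>
     ad MM (mu MM (e00 a) (e00 b)) (mu MM (e01 a) (e10 b)) = e00 c \<and>
     ad MM (mu MM (e00 a) (e01 b)) (mu MM (e01 a) (e11 b)) = e01 c \<and>
     ad MM (mu MM (e10 a) (e00 b)) (mu MM (e11 a) (e10 b)) = e10 c \<and>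
     ad MM (mu MM (e10 a) (e01 b)) (mu MM (e11 a) (e11 b)) = e11 c"
    by (cases c) (auto simp: mmul_def)
  also have "\<dots> \<longleftrightarrow> eventually (\<lambda>n. val (e00 a) n * val (e00 b) n + val (e01 a) n * val (e10 b) n = val (e00 c) n) sequentially \<and>
     eventually (\<lambda>n. val (e00 a) n * val (e01 b) n + val (e01 a) n * val (e11 b) n = val (e01 c) n) sequentially \<and>
     eventually (\<lambda>n. val (e10 a) n * val (e00 b) n + val (e11 a) n * val (e10 b) n = val (e10 c) n) sequentially \<and>
     eventually (\<lambda>n. val (e10 a) n * val (e01 b) n + val (e11 a) n * val (e11 b) n = val (e11 c) n) sequentially"
    by (simp only: eq_via[OF val_sp ev_refl])
  also have "\<dots> \<longleftrightarrow> eventually (\<lambda>n. mm (vm a n) (vm b n) = vm c n) sequentially"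
    by (simp add: vm_def mm_def eventually_conj_iff[symmetric])
  finally show ?thesis .
qed

lemma prec_i_iff: "prec_i MM a b \<longleftrightarrow> eventually (\<lambda>n. prec_i Nstd (vm a n) (vm b n)) sequentially"
  unfolding prec_i_def lq_mu by (simp add: vm_def Nstd_def eventually_conj_iff[symmetric])

lemma prec_e_iff: "prec_e MM a b \<longleftrightarrow> eventually (\<lambda>n. prec_e Nstd (vm a n) (vm b n)) sequentially"
  unfolding prec_e_def lq_mu by (simp add: vm_def Nstd_def eventually_conj_iff[symmetric])

lemma not_prec_e: "\<not> prec_e MM a b \<Longrightarrow> eventually (\<lambda>n. \<not> prec_e Nstd (vm a n) (vm b n)) sequentially"
proof -
  assume h: "\<not> prec_e MM a b"
  have nl: "eventually (\<lambda>n. \<not> (val x n * val y n \<le> val z n * val w n)) sequentially"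
    if "\<not> lq MM (mu MM x y) (mu MM z w)" for x y z w
  proof -
    have "eventually (\<lambda>n. val (mu MM z w) n < val (mu MM x y) n) sequentially" using not_lq[OF that] .
    thus ?thesis using val_mu[of x y] val_mu[of z w] by eventually_elim simp
  qed
  have "\<not> lq MM (mu MM (e01 b) (e10 a)) (mu MM (e00 b) (e11 a)) \<or> \<not> lq MM (mu MM (e00 b) (e01 a)) (mu MM (e01 b) (e00 a))
    \<or> \<not> lq MM (mu MM (e11 b) (e10 a)) (mu MM (e10 b) (e11 a)) \<or> \<not> lq MM (mu MM (e10 b) (e01 a)) (mu MM (e11 b) (e00 a))"
    using h unfolding prec_e_def by blast
  thus ?thesis
    by (elim disjE) (drule nl, erule eventually_mono, simp add: prec_e_Nstd vm_def)+
qed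

lemma mle_iff: "mle MM a b \<longleftrightarrow> eventually (\<lambda>n. e00 (vm a n) \<le> e00 (vm b n) \<and> e01 (vm a n) \<le> e01 (vm b n) \<and>
    e10 (vm a n) \<le> e10 (vm b n) \<and> e11 (vm a n) \<le> e11 (vm b n)) sequentially"
  unfolding mle_def by (simp add: lq_iff vm_def eventually_conj_iff)

lemma vm_idM: "eventually (\<lambda>n. vm (idM MM) n = I2) sequentially"
  using val_on val_zr by eventually_elim (simp add: vm_def idM_def I2_def)
lemma vm_matB: "eventually (\<lambda>n. vm (matB MM) n = Bm) sequentially"
  using val_on val_zr by eventually_elim (simp add: vm_def matB_def Bm_def)
lemma vm_brk: "eventually (\<lambda>n. vm (brk MM x) n = ev (blk (val x n))) sequentially"
  using val_on val_ad[of x "on MM"] by eventually_elim (simp add: vm_def brk_def ev_blk)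
lemma vm_brk_num: "eventually (\<lambda>n. vm (brk MM (numM MM k)) n = ev (blk k)) sequentially"
  using vm_brk[of "numM MM k"] val_num[of k] by eventually_elim simp

lemma idM_Nstd: "idM Nstd = I2" by (simp add: idM_def Nstd_def I2_def)
lemma matB_Nstd: "matB Nstd = Bm" by (simp add: matB_def Nstd_def Bm_def)

lemma ur_to_N: "ur MM a \<Longrightarrow> eventually (\<lambda>n. ur Nstd (vm a n)) sequentially"
proof -
  assume "ur MM a"
  hence "a = idM MM \<or> prec_i MM (matB MM) a" by (simp add: ur_def)
  thus ?thesis
  proof
    assume "a = idM MM"
    hence "eventually (\<lambda>n. vm a n = I2) sequentially" using vm_idM by simp
    thus ?thesis by eventually_elim (simp add: ur_Nstd)
  next
    assume "prec_i MM (matB MM) a"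
    hence "eventually (\<lambda>n. prec_i Nstd (vm (matB MM) n) (vm a n)) sequentially" by (simp add: prec_i_iff)
    thus ?thesis using vm_matB by eventually_elim (simp add: ur_def matB_Nstd)
  qed
qed

lemma ur_from_N: "eventually (\<lambda>n. ur Nstd (vm a n) \<and> vm a n \<noteq> I2) sequentially \<Longrightarrow> ur MM a"
proof -
  assume h: "eventually (\<lambda>n. ur Nstd (vm a n) \<and> vm a n \<noteq> I2) sequentially"
  have "eventually (\<lambda>n. prec_i Nstd (vm (matB MM) n) (vm a n)) sequentially"
    using h vm_matB by eventually_elim (auto simp: ur_def matB_Nstd idM_Nstd)
  hence "prec_i MM (matB MM) a" by (simp add: prec_i_iff)
  thus ?thesis by (simp add: ur_def)
qed

definition mkm :: "ex \<Rightarrow> ex \<Rightarrow> ex \<Rightarrow> ex \<Rightarrow> nat m2" where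
  "mkm x0 x1 x2 x3 = M2 (idx x0) (idx x1) (idx x2) (idx x3)"

lemma vm_mkm: "eventually (\<lambda>n. vm (mkm x0 x1 x2 x3) n = M2 (evx x0 n) (evx x1 n) (evx x2 n) (evx x3 n)) sequentially"
  using val_idx[of x0] val_idx[of x1] val_idx[of x2] val_idx[of x3]
  by eventually_elim (simp add: vm_def mkm_def)

definition Mpi :: "nat m2" where "Mpi = mkm (EG 0) (EG 1) (EG 2) (EG 3)"

lemma vm_Mpi: "eventually (\<lambda>n. vm Mpi n = piN n) sequentially"
  using vm_mkm[of "EG 0" "EG 1" "EG 2" "EG 3"] by eventually_elim (cases "piN n", simp add: Mpi_def)

definition Mrd :: "nat \<Rightarrow> nat m2 \<Rightarrow> nat m2" where
  "Mrd k a = mkm (EM (ET (rx (e00 a)) (numx (k + 1))) (rx (e01 a))) (EM (rx (e01 a)) (ET (numx k) (rx (e00 a))))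
                 (EM (ET (rx (e10 a)) (numx (k + 1))) (rx (e11 a))) (EM (rx (e11 a)) (ET (numx k) (rx (e10 a))))"

lemma vm_Mrd: "eventually (\<lambda>n. vm (Mrd k a) n = rdiv k (vm a n)) sequentially"
  unfolding Mrd_def
  using vm_mkm[of "EM (ET (rx (e00 a)) (numx (k + 1))) (rx (e01 a))" "EM (rx (e01 a)) (ET (numx k) (rx (e00 a)))"
                  "EM (ET (rx (e10 a)) (numx (k + 1))) (rx (e11 a))" "EM (rx (e11 a)) (ET (numx k) (rx (e10 a)))"]
  by eventually_elim (simp only:, simp add: rdiv_def vm_def val_def)

definition Mld :: "nat \<Rightarrow> nat m2 \<Rightarrow> nat m2" where
  "Mld k a = mkm (EM (ET (numx (k + 1)) (rx (e00 a))) (ET (numx k) (rx (e10 a))))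
                 (EM (ET (numx (k + 1)) (rx (e01 a))) (ET (numx k) (rx (e11 a))))
                 (EM (rx (e10 a)) (rx (e00 a))) (EM (rx (e11 a)) (rx (e01 a)))"

lemma vm_Mld: "eventually (\<lambda>n. vm (Mld k a) n = ldiv k (vm a n)) sequentially"
  unfolding Mld_def
  using vm_mkm[of "EM (ET (numx (k + 1)) (rx (e00 a))) (ET (numx k) (rx (e10 a)))"
                  "EM (ET (numx (k + 1)) (rx (e01 a))) (ET (numx k) (rx (e11 a)))"
                  "EM (rx (e10 a)) (rx (e00 a))" "EM (rx (e11 a)) (rx (e01 a))"]
  by eventually_elim (simp only:, simp add: ldiv_def vm_def val_def)

end


lemma concat_blk_hd: "ws \<noteq> [] \<Longrightarrow> concat (map blk ws) \<noteq> [] \<and> hd (concat (map blk ws))"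
  by (cases ws) (simp_all add: blk_def)

lemma pw_nonempty: "p \<ge> 1 \<or> q \<ge> 1 \<Longrightarrow> replicate p c @ replicate q b \<noteq> []"
  by auto

lemma pw_urN: "p \<ge> 1 \<or> q \<ge> 1 \<Longrightarrow> ur Nstd (pw c b p q) \<and> pw c b p q \<noteq> I2"
proof -
  assume h: "p \<ge> 1 \<or> q \<ge> 1"
  let ?w = "concat (map blk (replicate p c @ replicate q b))"
  have w: "?w \<noteq> [] \<and> hd ?w" using concat_blk_hd[OF pw_nonempty[OF h]] .
  have "ur Nstd (ev ?w)" using w by (simp add: ur_ev)
  moreover have "ev ?w \<noteq> I2"
  proof
    assume "ev ?w = I2"
    hence "ev ?w = ev []" by simp
    hence "?w = []" by (rule ev_inj)
    thus False using w by simp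
  qed
  ultimately show ?thesis by (simp add: pw_def)
qed

lemma blk_urN: "ur Nstd (ev (blk k)) \<and> ev (blk k) \<noteq> I2"
proof -
  have "ur Nstd (ev (blk k))" by (simp add: ur_ev blk_def del: ev.simps)
  moreover have "ev (blk k) \<noteq> I2"
  proof
    assume "ev (blk k) = I2" hence "ev (blk k) = ev []" by simp
    hence "blk k = []" by (rule ev_inj)
    thus False by (simp add: blk_def)
  qed
  ultimately show ?thesis ..
qed

lemma pw_rdiv: "j \<ge> 1 \<Longrightarrow> pw c b p j = mm (pw c b p (j - 1)) (ev (blk b))"
  using pw_Suc_q[of c b p "j - 1"] by simp

lemma pw_ldiv: "p \<ge> 1 \<Longrightarrow> pw c b p j = mm (ev (blk c)) (pw c b (p - 1) j)"
  using pw_Suc_p[of c b "p - 1" j] by simp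

lemma pw_0: "pw c b p 0 = Pm c p"
proof -
  have "Pm b 0 = I2" by (simp add: Pm_def)
  thus ?thesis by (simp add: pw_Pm)
qed

lemma blk_ne_pw: "p \<ge> 1 \<Longrightarrow> j \<ge> 1 \<Longrightarrow> ev (blk c) \<noteq> pw c b p j"
proof
  assume h: "p \<ge> 1" "j \<ge> 1" and e: "ev (blk c) = pw c b p j"
  hence "blk c = concat (map blk (replicate p c @ replicate j b))" unfolding pw_def using h(1) by (intro ev_inj) simp
  hence "length (blk c) = length (concat (map blk (replicate p c @ replicate j b)))" by simp
  hence "Suc c = j + (p + (b * j + c * p))" by (simp add: length_concat blk_def sum_list_replicate)
  moreover have "c * p \<ge> c" using h by simp
  ultimately show False using h by linarith
qed


lemma pt_rdiv: "j \<ge> 1 \<Longrightarrow> rdiv b (pw c b p j) = pw c b p (j - 1)"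
  using pw_rdiv[of j c b p] rdiv_mm by metis
lemma pt_ldiv: "p \<ge> 1 \<Longrightarrow> ldiv c (pw c b p j) = pw c b (p - 1) j"
  using pw_ldiv[of p c b j] ldiv_mm by metis
lemma pt_mm_J: "j \<ge> 1 \<Longrightarrow> mm (pw c b p (j - 1)) (ev (blk b)) = pw c b p j"
  using pw_rdiv[of j c b p] by simp
lemma pt_mm_C: "p \<ge> 1 \<Longrightarrow> mm (ev (blk c)) (pw c b (p - 1) j) = pw c b p j"
  using pw_ldiv[of p c b j] by simp
lemma pt_prec_e: "j \<ge> 1 \<Longrightarrow> prec_e Nstd (ev (blk b)) (pw c b p j)"
  using pt_mm_J[of j c b p] prec_e_mm[OF det1_ev] by metis
lemma pt_prec_i: "j \<ge> 1 \<Longrightarrow> prec_i Nstd (pw c b p (j - 1)) (pw c b p j)"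
  using pt_mm_J[of j c b p] prec_i_mm[OF det1_pw] by metis
lemma pt_prec_i_C: "p \<ge> 1 \<Longrightarrow> prec_i Nstd (ev (blk c)) (pw c b p j)"
  using pt_mm_C[of p c b j] prec_i_mm[OF det1_ev] by metis
lemma pt_le: "j \<ge> 1 \<Longrightarrow> e00 (pw c b p (j - 1)) \<le> e00 (pw c b p j) \<and> e01 (pw c b p (j - 1)) \<le> e01 (pw c b p j) \<and>
   e10 (pw c b p (j - 1)) \<le> e10 (pw c b p j) \<and> e11 (pw c b p (j - 1)) \<le> e11 (pw c b p j)"
proof -
  assume j: "j \<ge> 1"
  have "e00 (pw c b p (j - 1)) \<le> e00 (mm (pw c b p (j - 1)) (ev (blk b))) \<and> e01 (pw c b p (j - 1)) \<le> e01 (mm (pw c b p (j - 1)) (ev (blk b))) \<and>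
   e10 (pw c b p (j - 1)) \<le> e10 (mm (pw c b p (j - 1)) (ev (blk b))) \<and> e11 (pw c b p (j - 1)) \<le> e11 (mm (pw c b p (j - 1)) (ev (blk b)))"
    by (rule le_mm[OF det1_ev])
  thus ?thesis using pt_mm_J[OF j, of c b p] by simp
qed
lemma pt_le_C: "p \<ge> 1 \<Longrightarrow> e00 (ev (blk c)) \<le> e00 (pw c b p j) \<and> e01 (ev (blk c)) \<le> e01 (pw c b p j) \<and>
   e10 (ev (blk c)) \<le> e10 (pw c b p j) \<and> e11 (ev (blk c)) \<le> e11 (pw c b p j)"
proof -
  assume p: "p \<ge> 1"
  have "e00 (ev (blk c)) \<le> e00 (mm (ev (blk c)) (pw c b (p - 1) j)) \<and> e01 (ev (blk c)) \<le> e01 (mm (ev (blk c)) (pw c b (p - 1) j)) \<and>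
   e10 (ev (blk c)) \<le> e10 (mm (ev (blk c)) (pw c b (p - 1) j)) \<and> e11 (ev (blk c)) \<le> e11 (mm (ev (blk c)) (pw c b (p - 1) j))"
    by (rule le_mm[OF det1_pw])
  thus ?thesis using pt_mm_C[OF p, of c b j] by simp
qed
lemma prec_e_self: "prec_e Nstd (ev (blk c)) (ev (blk c))"
  using prec_e_mm[OF det1_ev[of "blk c"], of I2] by simp

context setting
begin

lemma ev_ge1: "eventually (\<lambda>n. al * n \<ge> 1 \<and> be * n \<ge> 1) sequentially"
proof -
  have "eventually (\<lambda>n. n \<ge> 1) sequentially" by (rule eventually_ge_at_top)
  thus ?thesis by (rule eventually_mono) (use al be in simp)
qed

lemma occ_pointwise:
  assumes "occ MM a k Mpi"
  shows "eventually (\<lambda>n. (val k n = gi \<or> val k n = gb) \<and>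
    (val k n = gb \<longrightarrow> (\<exists>j. 1 \<le> j \<and> j \<le> be * n \<and> vm a n = pw gi gb (al * n) j))) sequentially"
proof -
  from assms obtain g h where
    g: "sl2 MM g" "mmul MM a g = Mpi" "ur MM g" and h: "sl2 MM h" "mmul MM h (brk MM k) = a"
    unfolding occ_def prec_iu_def prec_eu_def by blast
  have G1: "eventually (\<lambda>n. det1 (vm g n)) sequentially" using g(1) by (simp add: sl2_iff)
  have G2: "eventually (\<lambda>n. mm (vm a n) (vm g n) = vm Mpi n) sequentially" using g(2) by (simp add: mmul_iff)
  have G3: "eventually (\<lambda>n. ur Nstd (vm g n)) sequentially" by (rule ur_to_N[OF g(3)])
  have H1: "eventually (\<lambda>n. det1 (vm h n)) sequentially" using h(1) by (simp add: sl2_iff)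
  have H2: "eventually (\<lambda>n. mm (vm h n) (vm (brk MM k) n) = vm a n) sequentially" using h(2) by (simp add: mmul_iff)
  show ?thesis using G1 G2 G3 H1 H2 vm_brk[of k] vm_Mpi
  proof eventually_elim
    case (elim n)
    have 1: "mm (vm a n) (vm g n) = pw gi gb (al * n) (be * n)" using elim by (simp add: piN_def)
    have 2: "mm (vm h n) (ev (blk (val k n))) = vm a n" using elim by simp
    show ?case using W[OF gbi elim(1) 1 elim(3) 2 elim(4)] .
  qed
qed

lemma clause1:
  assumes "occ MM a k Mpi" shows "k = numM MM gi \<or> k = numM MM gb"
proof -
  have E: "eventually (\<lambda>n. val k n = gi \<or> val k n = gb) sequentially"
    using occ_pointwise[OF assms] by (rule eventually_mono) simp
  from trichM[of k "numM MM gb"] show ?thesis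
  proof (elim disjE)
    assume "eventually (\<lambda>n. val k n = val (numM MM gb) n) sequentially"
    hence "k = numM MM gb" by (rule eq_iff[THEN iffD2])
    thus ?thesis ..
  next
    assume "eventually (\<lambda>n. val k n < val (numM MM gb) n) sequentially"
    hence "eventually (\<lambda>n. val k n = val (numM MM gi) n) sequentially"
      using E val_num[of gb] val_num[of gi] by eventually_elim auto
    hence "k = numM MM gi" by (rule eq_iff[THEN iffD2])
    thus ?thesis ..
  next
    assume "eventually (\<lambda>n. val (numM MM gb) n < val k n) sequentially"
    hence "eventually (\<lambda>n. val k n = val (numM MM gi) n) sequentially"
      using E val_num[of gb] val_num[of gi] by eventually_elim auto
    hence "k = numM MM gi" by (rule eq_iff[THEN iffD2])
    thus ?thesis ..
  qed
qed

end


context setting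
begin

lemma bad_case:
  assumes "eventually (\<lambda>n. vm D n = Pm gi (al * n)) sequentially"
  shows False
proof -
  have E1: "eventually (\<lambda>n. real (val (e10 D) n) = Uq gi (al * n)) sequentially"
    using assms
  proof eventually_elim
    case (elim n)
    have "val (e10 D) n = e10 (vm D n)" by (simp add: vm_def)
    also have "\<dots> = e10 (Pm gi (al * n))" using elim by simp
    finally have "real (val (e10 D) n) = real (e10 (Pm gi (al * n)))" by simp
    also have "\<dots> = Uq gi (al * n)" using Pm_entries[OF gi, of "al * n"] by simp
    finally show ?case .
  qed
  obtain f where f: "f \<in> Expo Gam" "eventually (\<lambda>n. real (evx (rx (e10 D)) n) = f n) sequentially"
    using evx_Ex by blast
  obtain F a where Fa: "finite F" "F \<subseteq> Gam" "\<forall>n. f n = (\<Sum>r\<in>F. a r * r ^ n)"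
    using f(1) unfolding Expo_def by blast
  define c where "c = 1 / (muq gi - nuq gi)"
  define w where "w = nuq gi ^ al"
  have U: "Uq gi (al * n) = c * mC ^ n - c * w ^ n" for n
    by (simp add: Uq_def c_def w_def mC_def power_mult diff_divide_distrib)
  have ev: "eventually (\<lambda>n. (\<Sum>r\<in>F. a r * r ^ n) = c * mC ^ n - c * w ^ n) sequentially"
    using E1 f(2) by eventually_elim (simp add: Fa(3) U val_def)
  have pos: "F \<subseteq> {0<..}" using Fa(2) Gam_pos by blast
  have mF: "mC \<notin> F" using Fa(2) mC_notin by blast
  have nu: "nuq gi > 0" "nuq gi < 1"
    using munu(4)[OF gi] munu(3)[OF gi] munu(8)[OF gi] by (auto simp: inverse_less_1_iff)
  have w: "w > 0" "w < 1" using nu al unfolding w_def by (simp_all add: power_less_one_iff)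
  have "mC \<noteq> w" using w mC_gt by simp
  moreover have "c \<noteq> 0" using munu(5)[OF gi] by (simp add: c_def)
  ultimately show False
    using no_cancel[OF Fa(1) pos mF _ w(1)] mC_gt ev by simp
qed

lemma ur_pwI:
  assumes "eventually (\<lambda>n. \<exists>p q. (p \<ge> 1 \<or> q \<ge> 1) \<and> vm X n = pw gi gb p q) sequentially"
  shows "ur MM X"
proof (rule ur_from_N)
  show "eventually (\<lambda>n. ur Nstd (vm X n) \<and> vm X n \<noteq> I2) sequentially"
    using assms by (rule eventually_mono) (metis pw_urN)
qed

lemma clause2:
  assumes occ: "occ MM a (numM MM gb) Mpi"
  shows "\<exists>b. sl2 MM b \<and> mlt MM b a \<and> (\<exists>c. sl2 MM c \<and> mlt MM c a \<and> occ MM b (numM MM gb) a \<and> occ MM c (numM MM gi) a)"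
proof -
  have E0: "eventually (\<lambda>n. al * n \<ge> 1 \<and> (\<exists>j. 1 \<le> j \<and> vm a n = pw gi gb (al * n) j)) sequentially"
    using occ_pointwise[OF occ] val_num[of gb] ev_ge1 by eventually_elim auto
  define D where "D = Mrd gb a"
  have E1: "eventually (\<lambda>n. al * n \<ge> 1 \<and> (\<exists>j. 1 \<le> j \<and> vm a n = pw gi gb (al * n) j \<and> vm D n = pw gi gb (al * n) (j - 1))) sequentially"
    using E0 vm_Mrd[of gb a] unfolding D_def[symmetric] by eventually_elim (auto simp: pt_rdiv)
  define Jm where "Jm = brk MM (numM MM gb)"
  have VJ: "eventually (\<lambda>n. vm Jm n = ev (blk gb)) sequentially" unfolding Jm_def by (rule vm_brk_num)
  show ?thesis
  proof (cases "prec_e MM Jm D")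
    case False
    have "eventually (\<lambda>n. \<not> prec_e Nstd (vm Jm n) (vm D n)) sequentially" by (rule not_prec_e[OF False])
    hence "eventually (\<lambda>n. vm D n = Pm gi (al * n)) sequentially"
      using E1 VJ
    proof eventually_elim
      case (elim n)
      then obtain j where j: "1 \<le> j" "vm D n = pw gi gb (al * n) (j - 1)" by blast
      have "j = 1"
      proof (rule ccontr)
        assume "j \<noteq> 1"
        hence "j - 1 \<ge> 1" using j by simp
        hence "prec_e Nstd (ev (blk gb)) (pw gi gb (al * n) (j - 1))" by (rule pt_prec_e)
        thus False using elim j by simp
      qed
      thus ?case using j by (simp add: pw_0)
    qed
    hence False by (rule bad_case)
    thus ?thesis ..
  next
    case True
    have PE: "eventually (\<lambda>n. prec_e Nstd (vm Jm n) (vm D n)) sequentially" using True by (simp add: prec_e_iff)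
    have E2: "eventually (\<lambda>n. al * n \<ge> 1 \<and> (\<exists>j. 2 \<le> j \<and> vm a n = pw gi gb (al * n) j \<and> vm D n = pw gi gb (al * n) (j - 1))) sequentially"
      using E1 PE VJ
    proof eventually_elim
      case (elim n)
      then obtain j where j: "1 \<le> j" "vm a n = pw gi gb (al * n) j" "vm D n = pw gi gb (al * n) (j - 1)" by blast
      have "j \<noteq> 1"
      proof
        assume "j = 1"
        hence "prec_e Nstd (ev (blk gb)) (pw gi gb (al * n) 0)" using elim j by simp
        thus False using not_prec_e_pw0[OF gbi] elim by blast
      qed
      hence "2 \<le> j" using j by simp
      thus ?case using elim(1) j by blast
    qed
    define H where "H = Mrd gb D"
    have E3: "eventually (\<lambda>n. al * n \<ge> 1 \<and> (\<exists>j. 2 \<le> j \<and> vm a n = pw gi gb (al * n) j \<and> vm D n = pw gi gb (al * n) (j - 1)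
        \<and> vm H n = pw gi gb (al * n) (j - 1 - 1))) sequentially"
      using E2 vm_Mrd[of gb D] unfolding H_def[symmetric]
      by eventually_elim (auto simp: pt_rdiv)
    define Cm where "Cm = brk MM (numM MM gi)"
    have VC: "eventually (\<lambda>n. vm Cm n = ev (blk gi)) sequentially" unfolding Cm_def by (rule vm_brk_num)
    define G where "G = Mld gi a"
    have E4: "eventually (\<lambda>n. al * n \<ge> 1 \<and> (\<exists>j. 2 \<le> j \<and> vm a n = pw gi gb (al * n) j \<and> vm G n = pw gi gb (al * n - 1) j)) sequentially"
      using E2 vm_Mld[of gi a] unfolding G_def[symmetric]
      by eventually_elim (auto simp: pt_ldiv)
    have sD: "sl2 MM D" unfolding sl2_iff using E2 by eventually_elim (auto simp: det1_pw)
    have leD: "mle MM D a" unfolding mle_iff using E2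
    proof eventually_elim
      case (elim n)
      then obtain j where j: "2 \<le> j" "vm a n = pw gi gb (al * n) j" "vm D n = pw gi gb (al * n) (j - 1)" by auto
      have "1 \<le> j" using j by simp
      from pt_le[OF this, of gi gb "al * n"] show ?case using j by simp
    qed
    have neD: "D \<noteq> a"
    proof
      assume "D = a"
      hence "eventually (\<lambda>n. vm D n = vm a n) sequentially" by (rule m2_eq_iff[THEN iffD1])
      hence "eventually (\<lambda>n. False) sequentially" using E2
      proof eventually_elim
        case (elim n)
        then obtain j where j: "2 \<le> j" "pw gi gb (al * n) (j - 1) = pw gi gb (al * n) j" by auto
        have "j - 1 = j" using j(2) by (rule pw_inj)
        thus False using j(1) by simp
      qed
      thus False by simp
    qed
    have sC: "sl2 MM Cm" unfolding sl2_iff using VC by eventually_elim (simp add: det1_ev)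
    have leC: "mle MM Cm a" unfolding mle_iff using VC E2
    proof eventually_elim
      case (elim n)
      then obtain j where j: "vm a n = pw gi gb (al * n) j" by auto
      have "1 \<le> al * n" using elim by simp
      from pt_le_C[OF this, of gi gb j] show ?case using j elim by simp
    qed
    have neC: "Cm \<noteq> a"
    proof
      assume "Cm = a"
      hence "eventually (\<lambda>n. vm Cm n = vm a n) sequentially" by (rule m2_eq_iff[THEN iffD1])
      hence "eventually (\<lambda>n. False) sequentially" using E2 VC
      proof eventually_elim
        case (elim n)
        then obtain j where "2 \<le> j" "ev (blk gi) = pw gi gb (al * n) j" by auto
        thus False using blk_ne_pw[of "al * n" j gi gb] elim by auto
      qed
      thus False by simp
    qed
    have sJ: "sl2 MM Jm" unfolding sl2_iff using VJ by eventually_elim (simp add: det1_ev)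
    have uJ: "ur MM Jm" by (rule ur_from_N) (use VJ in \<open>eventually_elim, simp add: blk_urN\<close>)
    have uC: "ur MM Cm" by (rule ur_from_N) (use VC in \<open>eventually_elim, simp add: blk_urN\<close>)
    have occD: "occ MM D (numM MM gb) a"
      unfolding occ_def prec_iu_def prec_eu_def Jm_def[symmetric]
    proof (intro conjI exI)
      show "prec_i MM D a" unfolding prec_i_iff using E2
      proof eventually_elim
        case (elim n)
        then obtain j where j: "2 \<le> j" "vm a n = pw gi gb (al * n) j" "vm D n = pw gi gb (al * n) (j - 1)" by auto
        have "1 \<le> j" using j by simp
        from pt_prec_i[OF this, of gi gb "al * n"] show ?case using j by simp
      qed
      show "ur MM D"
      proof (rule ur_pwI)
        show "eventually (\<lambda>n. \<exists>p q. (p \<ge> 1 \<or> q \<ge> 1) \<and> vm D n = pw gi gb p q) sequentially"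
          using E2
        proof eventually_elim
          case (elim n)
          then obtain j where j: "vm D n = pw gi gb (al * n) (j - 1)" by auto
          show ?case using j elim by (intro exI[of _ "al * n"] exI[of _ "j - 1"]) simp
        qed
      qed
      show "sl2 MM Jm" by (rule sJ)
      show "mmul MM D Jm = a" unfolding mmul_iff using E2 VJ
      proof eventually_elim
        case (elim n)
        then obtain j where j: "2 \<le> j" "vm a n = pw gi gb (al * n) j" "vm D n = pw gi gb (al * n) (j - 1)" by auto
        have "1 \<le> j" using j by simp
        from pt_mm_J[OF this, of gi gb "al * n"] show ?case using j elim by simp
      qed
      show "ur MM Jm" by (rule uJ)
      show "prec_e MM Jm D" by (rule True)
      show "ur MM Jm" by (rule uJ)
      show "sl2 MM H" unfolding sl2_iff using E3 by eventually_elim (auto simp: det1_pw)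
      show "mmul MM H Jm = D" unfolding mmul_iff using E3 VJ
      proof eventually_elim
        case (elim n)
        then obtain j where j: "2 \<le> j" "vm D n = pw gi gb (al * n) (j - 1)" "vm H n = pw gi gb (al * n) (j - 1 - 1)" by auto
        have "mm (pw gi gb (al * n) (j - 1 - 1)) (ev (blk gb)) = pw gi gb (al * n) (j - 1)"
          by (rule pt_mm_J) (use j in simp)
        thus ?case using j elim by simp
      qed
      show "ur MM H"
      proof (rule ur_pwI)
        show "eventually (\<lambda>n. \<exists>p q. (p \<ge> 1 \<or> q \<ge> 1) \<and> vm H n = pw gi gb p q) sequentially"
          using E3
        proof eventually_elim
          case (elim n)
          then obtain j where j: "vm H n = pw gi gb (al * n) (j - 1 - 1)" by auto
          show ?case using j elim by (intro exI[of _ "al * n"] exI[of _ "j - 1 - 1"]) simp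
        qed
      qed
    qed
    have occC: "occ MM Cm (numM MM gi) a"
      unfolding occ_def prec_iu_def prec_eu_def Cm_def[symmetric]
    proof (intro conjI exI)
      show "prec_i MM Cm a" unfolding prec_i_iff using E2 VC
      proof eventually_elim
        case (elim n)
        then obtain j where j: "vm a n = pw gi gb (al * n) j" by auto
        have "1 \<le> al * n" using elim by simp
        from pt_prec_i_C[OF this, of gi gb j] show ?case using j elim by simp
      qed
      show "ur MM Cm" by (rule uC)
      show "sl2 MM G" unfolding sl2_iff using E4 by eventually_elim (auto simp: det1_pw)
      show "mmul MM Cm G = a" unfolding mmul_iff using E4 VC
      proof eventually_elim
        case (elim n)
        then obtain j where j: "vm a n = pw gi gb (al * n) j" "vm G n = pw gi gb (al * n - 1) j" by auto
        have "1 \<le> al * n" using elim by simp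
        from pt_mm_C[OF this, of gi gb j] show ?case using j elim by simp
      qed
      show "ur MM G"
      proof (rule ur_pwI)
        show "eventually (\<lambda>n. \<exists>p q. (p \<ge> 1 \<or> q \<ge> 1) \<and> vm G n = pw gi gb p q) sequentially"
          using E4
        proof eventually_elim
          case (elim n)
          then obtain j where j: "2 \<le> j" "vm G n = pw gi gb (al * n - 1) j" by auto
          show ?case using j by (intro exI[of _ "al * n - 1"] exI[of _ j]) simp
        qed
      qed
      show "prec_e MM Cm Cm" unfolding prec_e_iff using VC by eventually_elim (simp add: prec_e_self)
      show "ur MM Cm" by (rule uC)
      show "sl2 MM (idM MM)" unfolding sl2_iff using vm_idM by eventually_elim (simp add: det1_I2)
      show "mmul MM (idM MM) Cm = Cm" unfolding mmul_iff using vm_idM by eventually_elim simp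
      show "ur MM (idM MM)" by (simp add: ur_def)
    qed
    have "mlt MM D a" "mlt MM Cm a" using leD neD leC neC by (simp_all add: mlt_def)
    thus ?thesis using sD sC occD occC by blast
  qed
qed

lemma not_con: "\<not> con_BeSh MM gb gi"
proof -
  have sP: "sl2 MM Mpi" unfolding sl2_iff using vm_Mpi by eventually_elim (simp add: piN_def det1_pw)
  have uP: "ur MM Mpi"
  proof (rule ur_from_N)
    show "eventually (\<lambda>n. ur Nstd (vm Mpi n) \<and> vm Mpi n \<noteq> I2) sequentially"
      using vm_Mpi ev_ge1
    proof eventually_elim
      case (elim n)
      thus ?case using pw_urN[of "al * n" "be * n" gi gb] by (simp add: piN_def)
    qed
  qed
  have peP: "prec_e MM (brk MM (numM MM gb)) Mpi" unfolding prec_e_iff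
    using vm_Mpi ev_ge1 vm_brk_num[of gb] by eventually_elim (auto simp: piN_def intro: pt_prec_e)
  have "proof0 MM gb gi Mpi"
    unfolding proof0_def using uP clause1 clause2 by blast
  hence "isproof MM gb gi Mpi (numM MM gb)" using peP by (simp add: isproof_def)
  thus ?thesis using sP by (auto simp: con_BeSh_def)
qed

end


lemma powi_lt: "(r::real) > 1 \<Longrightarrow> a < b \<Longrightarrow> power_int r a < power_int r b"
  by (rule power_int_strict_increasing)

lemma powi_inj: assumes "(r::real) > 1" "power_int r a = power_int r b" shows "a = b"
proof (rule ccontr)
  assume "a \<noteq> b"
  hence "a < b \<or> b < a" by arith
  thus False using powi_lt[OF assms(1), of a b] powi_lt[OF assms(1), of b a] assms(2) by auto
qed

lemma powi_gt1: assumes "(r::real) > 1" shows "power_int r k > 1 \<longleftrightarrow> k > 0"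
proof
  assume h: "power_int r k > 1"
  show "k > 0"
  proof (rule ccontr)
    assume "\<not> k > 0"
    hence "k < 0 \<or> k = 0" by arith
    thus False using powi_lt[OF assms, of k 0] h by auto
  qed
next
  assume "k > 0"
  thus "power_int r k > 1" using powi_lt[OF assms, of 0 k] by simp
qed

lemma powi_lt1: assumes "(r::real) > 1" shows "power_int r k < 1 \<longleftrightarrow> k < 0"
proof
  assume h: "power_int r k < 1"
  show "k < 0"
  proof (rule ccontr)
    assume "\<not> k < 0"
    hence "k > 0 \<or> k = 0" by arith
    thus False using powi_lt[OF assms, of 0 k] h by auto
  qed
next
  assume "k < 0"
  thus "power_int r k < 1" using powi_lt[OF assms, of k 0] by simp
qed

lemma choose_exps:
  fixes gb gi :: nat
  assumes gb: "gb \<ge> 1" and gi: "gi \<ge> 1"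
  shows "\<exists>al be. al \<ge> 1 \<and> be \<ge> 1 \<and>
    (\<forall>s t::int. even (s + t) \<longrightarrow> muq gi ^ al \<noteq> power_int (muq gi ^ al) s * power_int (muq gb ^ be) t)"
proof -
  define mu where "mu = muq gi"
  define la where "la = muq gb"
  have mu1: "mu > 1" using munu(3)[OF gi] by (simp add: mu_def)
  have la1: "la > 1" using munu(3)[OF gb] by (simp add: la_def)
  show ?thesis
  proof (cases "\<exists>x y. x \<ge> 1 \<and> y \<ge> 1 \<and> mu ^ x = la ^ y")
    case True
    then obtain x y where xy: "x \<ge> 1" "y \<ge> 1" "mu ^ x = la ^ y" by blast
    define m where "m = mu ^ x"
    have m1: "m > 1" using mu1 xy(1) by (simp add: m_def one_less_power)
    have "\<forall>s t::int. even (s + t) \<longrightarrow> m \<noteq> power_int m s * power_int m t"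
    proof (intro allI impI)
      fix s t :: int assume ev: "even (s + t)"
      show "m \<noteq> power_int m s * power_int m t"
      proof
        assume "m = power_int m s * power_int m t"
        hence "power_int m 1 = power_int m (s + t)" using m1 by (simp add: power_int_add)
        hence "1 = s + t" by (rule powi_inj[OF m1])
        thus False using ev by (metis odd_one)
      qed
    qed
    hence "\<forall>s t::int. even (s + t) \<longrightarrow> muq gi ^ x \<noteq> power_int (muq gi ^ x) s * power_int (muq gb ^ y) t"
      using xy(3) by (simp add: m_def mu_def la_def)
    thus ?thesis using xy by blast
  next
    case False
    have "\<forall>s t::int. even (s + t) \<longrightarrow> mu \<noteq> power_int mu s * power_int la t"
    proof (intro allI impI)
      fix s t :: int assume ev: "even (s + t)"
      show "mu \<noteq> power_int mu s * power_int la t"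
      proof
        assume h: "mu = power_int mu s * power_int la t"
        define u where "u = 1 - s"
        have pa: "power_int mu (1 + (- s)) = power_int mu 1 * power_int mu (- s)"
          by (rule power_int_add) (use mu1 in simp)
        have "power_int mu u = power_int mu 1 * power_int mu (- s)"
          unfolding u_def using pa by simp
        also have "\<dots> = power_int la t" using h mu1 by (simp add: power_int_minus field_simps)
        finally have e: "power_int mu u = power_int la t" .
        consider "t = 0" | "t > 0" | "t < 0" by arith
        thus False
        proof cases
          case 1
          hence "power_int mu u = 1" using e by simp
          hence "u = 0" using powi_gt1[OF mu1, of u] powi_lt1[OF mu1, of u] by (cases "u > 0"; cases "u < 0") auto
          hence "s + t = 1" using 1 by (simp add: u_def)
          thus False using ev by (metis odd_one)
        next
          case 2
          hence "power_int la t > 1" using powi_gt1[OF la1] by simp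
          hence "1 < power_int mu u" using e by simp
          hence "u > 0" using powi_gt1[OF mu1, of u] by simp
          have "mu ^ nat u = la ^ nat t" using e \<open>u > 0\<close> 2 by (simp add: power_int_nonneg_exp)
          moreover have "nat u \<ge> 1" "nat t \<ge> 1" using \<open>u > 0\<close> 2 by auto
          ultimately show False using False by blast
        next
          case 3
          hence "power_int la t < 1" using powi_lt1[OF la1] by simp
          hence "power_int mu u < 1" using e by simp
          hence "u < 0" using powi_lt1[OF mu1, of u] by simp
          have "power_int mu (- u) = power_int la (- t)" using e by (simp add: power_int_minus)
          hence "mu ^ nat (- u) = la ^ nat (- t)" using \<open>u < 0\<close> 3 by (simp add: power_int_nonneg_exp)
          moreover have "nat (- u) \<ge> 1" "nat (- t) \<ge> 1" using \<open>u < 0\<close> 3 by auto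
          ultimately show False using False by blast
        qed
      qed
    qed
    thus ?thesis by (intro exI[of _ 1]) (simp add: mu_def la_def)
  qed
qed

theorem mainTheorem1:
  fixes gbot gimp :: nat
  assumes "0 < gbot" and "0 < gimp" and "gbot \<noteq> gimp"
  shows "\<exists>M :: nat struc. model_T M \<and> \<not> con_BeSh M gbot gimp"
proof -
  have gb: "gbot \<ge> 1" and gi: "gimp \<ge> 1" using assms by auto
  obtain al be where ab: "al \<ge> 1" "be \<ge> 1"
    "\<forall>s t::int. even (s + t) \<longrightarrow> muq gimp ^ al \<noteq> power_int (muq gimp ^ al) s * power_int (muq gbot ^ be) t"
    using choose_exps[OF gb gi] by blast
  interpret S: setting gbot gimp al be
    using gb gi assms(3) ab by unfold_locales auto
  show ?thesis using S.model_T_MM S.not_con by blast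
qed


end
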